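(* Let $X\in GL(n,\overline{\mathbb{K}})$ be a Belavin–Drinfeld twisted cocycle associated to $r_{DJ}$. Then $X=PD$ with $P\in GL(n,\mathbb{K}[j])$ and $D\in\mathrm{diag}(n,\overline{\mathbb{K}})$; moreover $\overline{P}=PSD_1$ for some invertible diagonal $D_1\in\mathrm{diag}(n,\mathbb{K}[j])$.
   Context: $\mathbb{K}=\mathbb{C}((\hbar))$, $\overline{\mathbb{K}}$ its algebraic closure, $\mathbb{K}[j]\subset\overline{\mathbb{K}}$ with $j^2=\hbar$, with conjugation $\overline{f_1+jf_2}=f_1-jf_2$ applied entrywise. $S$ is the antidiagonal matrix of ones. $r_{DJ}=\sum_{i<k}e_{ik}\otimes e_{ki}+\frac12\Omega_0$ with $\Omega_0=\sum_ie_{ii}\otimes e_{ii}-\frac1nI\otimes I$; $\mathrm{Ad}_X(a)=XaX^{-1}$; $\mathrm{diag}(n,F)$ denotes invertible diagonal matrices over $F$. A Belavin–Drinfeld twisted cocycle associated to $r_{DJ}$ is $X\in GL(n,\overline{\mathbb{K}})$ such that $(\mathrm{Ad}_{X^{-1}\sigma(X)}\otimes\mathrm{Ad}_{X^{-1}\sigma(X)})(r_{DJ})=r_{DJ}$ for every $\sigma\in\mathrm{Gal}(\overline{\mathbb{K}}/\mathbb{K}[j])$ and $(\mathrm{Ad}_{X^{-1}\sigma_2(X)}\otimes\mathrm{Ad}_{X^{-1}\sigma_2(X)})(r_{DJ})=r_{DJ}^{21}$ for every $\sigma_2\in\mathrm{Gal}(\overline{\mathbb{K}}/\mathbb{K})$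 whose restriction to $\mathbb{K}[j]$ is the conjugation. *)

theory Defs
  imports "HOL-Algebra.Algebraic_Closure_Type" "Jordan_Normal_Form.Matrix"
begin

text \<open>K = C((h)) is the field of formal Laurent series over the complex numbers;
  its algebraic closure is the type L below, with embedding to_ac.\<close>

type_synonym K = "complex fls"
type_synonym L = "complex fls alg_closure"

definition hbar :: L where "hbar = to_ac fls_X"

text \<open>K[j] inside L, for a chosen square root j of h.\<close>
definition Kj :: "L \<Rightarrow> L set" where
  "Kj j = {to_ac f1 + j * to_ac f2 | f1 f2. True}"

definition conjKj :: "L \<Rightarrow> L \<Rightarrow> L" where
  "conjKj j x = (THE y. \<exists>f1 f2. x = to_ac f1 + j * to_ac f2 \<and> y = to_ac f1 - j * to_ac f2)"

definition field_aut :: "(L \<Rightarrow> L) \<Rightarrow> bool" where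
  "field_aut g \<longleftrightarrow> bij g \<and> (\<forall>x y. g (x + y) = g x + g y) \<and>
     (\<forall>x y. g (x * y) = g x * g y) \<and> g 1 = 1"

definition Gal_Kj :: "L \<Rightarrow> (L \<Rightarrow> L) set" where
  "Gal_Kj j = {g. field_aut g \<and> (\<forall>x \<in> Kj j. g x = x)}"

definition Gal_K_conj :: "L \<Rightarrow> (L \<Rightarrow> L) set" where
  "Gal_K_conj j = {g. field_aut g \<and> (\<forall>f. g (to_ac f) = to_ac f) \<and>
                      (\<forall>x \<in> Kj j. g x = conjKj j x)}"

definition minv :: "nat \<Rightarrow> 'a::semiring_1 mat \<Rightarrow> 'a mat" where
  "minv n A = (SOME B. B \<in> carrier_mat n n \<and> A * B = 1\<^sub>m n \<and> B * A = 1\<^sub>m n)"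

definition GL_over :: "nat \<Rightarrow> 'a::semiring_1 set \<Rightarrow> 'a mat \<Rightarrow> bool" where
  "GL_over n F A \<longleftrightarrow> A \<in> carrier_mat n n \<and> (\<forall>i<n. \<forall>k<n. A $$ (i,k) \<in> F) \<and>
     (\<exists>B. B \<in> carrier_mat n n \<and> (\<forall>i<n. \<forall>k<n. B $$ (i,k) \<in> F) \<and>
          A * B = 1\<^sub>m n \<and> B * A = 1\<^sub>m n)"

text \<open>Tensors in gl_n \<otimes> gl_n, given by their coefficient t a b c d on the basis
  element e_ab \<otimes> e_cd (indices 0..n-1, zero outside).\<close>
type_synonym 'a tens = "nat \<Rightarrow> nat \<Rightarrow> nat \<Rightarrow> nat \<Rightarrow> 'a"

text \<open>(Ad_Y \<otimes> Ad_Y) t, with Ad_Y a = Y a Y^-1, extended bilinearly.\<close>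
definition Ad_tens :: "nat \<Rightarrow> 'a::field mat \<Rightarrow> 'a tens \<Rightarrow> 'a tens" where
  "Ad_tens n Y t = (\<lambda>a b c d. if a < n \<and> b < n \<and> c < n \<and> d < n then
     (\<Sum>i<n. \<Sum>k<n. \<Sum>p<n. \<Sum>q<n. t i k p q * Y $$ (a,i) * minv n Y $$ (k,b)
                                   * Y $$ (c,p) * minv n Y $$ (q,d))
     else 0)"

definition flip_tens :: "'a tens \<Rightarrow> 'a tens" where
  "flip_tens t = (\<lambda>a b c d. t c d a b)"

text \<open>r_DJ = sum_{i<k} e_ik \<otimes> e_ki + 1/2 Omega_0,
  Omega_0 = sum_i e_ii \<otimes> e_ii - 1/n I \<otimes> I.\<close>
definition r_DJ :: "nat \<Rightarrow> 'a::field tens" where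
  "r_DJ n = (\<lambda>a b c d. if a < n \<and> b < n \<and> c < n \<and> d < n then
     (if a < b \<and> c = b \<and> d = a then 1 else 0)
     + (1/2) * ((if a = b \<and> b = c \<and> c = d then 1 else 0)
                - (1 / of_nat n) * (if a = b \<and> c = d then 1 else 0))
     else 0)"

definition BD_twisted_cocycle :: "L \<Rightarrow> nat \<Rightarrow> L mat \<Rightarrow> bool" where
  "BD_twisted_cocycle j n M \<longleftrightarrow> M \<in> carrier_mat n n \<and> invertible_mat M \<and>
     (\<forall>g \<in> Gal_Kj j. Ad_tens n (minv n M * map_mat g M) (r_DJ n) = r_DJ n) \<and>
     (\<forall>g \<in> Gal_K_conj j. Ad_tens n (minv n M * map_mat g M) (r_DJ n) = flip_tens (r_DJ n))"

definition antidiag :: "nat \<Rightarrow> 'a::zero_neq_one mat" where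
  "antidiag n = mat n n (\<lambda>(i,k). if i + k = n - 1 then 1 else 0)"

end

theory Submission
  imports Defs "HOL-Algebra.Finite_Extensions"
begin

lemma fls_sq_X:
  fixes a b :: "complex fls"
  assumes "a^2 = fls_X * b^2"
  shows "a = 0 \<and> b = 0"
proof (cases "b = 0")
  case True
  then show ?thesis using assms by simp
next
  case False
  then have "a \<noteq> 0" using assms by auto
  have "fls_subdegree (a^2) = 2 * fls_subdegree a"
    using \<open>a \<noteq> 0\<close> by (simp add: power2_eq_square fls_subdegree_mult)
  moreover have "fls_subdegree (fls_X * b^2) = 2 * fls_subdegree b + 1"
    using False by (simp add: power2_eq_square fls_subdegree_mult)
  ultimately have "2 * fls_subdegree a = 2 * fls_subdegree b + 1" using assms by simp
  then show ?thesis by presburger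
qed

context
  fixes j :: L
  assumes jsq: "j ^ 2 = hbar"
begin

lemma j_notin: "j \<notin> range to_ac"
proof
  assume "j \<in> range to_ac"
  then obtain f where f: "j = to_ac f" by auto
  have "to_ac (f^2) = to_ac (fls_X * 1^2)" using jsq f by (simp add: hbar_def)
  then have "f^2 = fls_X * 1^2" by (rule injD[OF inj_to_ac])
  from fls_sq_X[OF this] show False by simp
qed

lemma Kj_unique:
  assumes "to_ac f1 + j * to_ac f2 = to_ac g1 + j * to_ac g2"
  shows "f1 = g1 \<and> f2 = g2"
proof (cases "f2 = g2")
  case True then show ?thesis using assms by simp
next
  case False
  have "j * to_ac (f2 - g2) = to_ac (g1 - f1)" using assms by (simp add: algebra_simps)
  then have "j = to_ac ((g1 - f1) / (f2 - g2))" using False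
    by (simp add: field_simps)
  then have "j \<in> range to_ac" by (rule image_eqI) simp
  then show ?thesis using j_notin by blast
qed

lemma conjKj_eq: "conjKj j (to_ac f1 + j * to_ac f2) = to_ac f1 - j * to_ac f2"
  unfolding conjKj_def
proof (rule the_equality)
  show "\<exists>g1 g2. to_ac f1 + j * to_ac f2 = to_ac g1 + j * to_ac g2 \<and>
        to_ac f1 - j * to_ac f2 = to_ac g1 - j * to_ac g2" by blast
next
  fix y assume "\<exists>g1 g2. to_ac f1 + j * to_ac f2 = to_ac g1 + j * to_ac g2 \<and> y = to_ac g1 - j * to_ac g2"
  then obtain g1 g2 where "to_ac f1 + j * to_ac f2 = to_ac g1 + j * to_ac g2" "y = to_ac g1 - j * to_ac g2" by blast
  then show "y = to_ac f1 - j * to_ac f2" using Kj_unique by blast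
qed

lemma jj: "j * j = to_ac fls_X" using jsq by (simp add: power2_eq_square hbar_def)

lemma Kj_I: "to_ac f1 + j * to_ac f2 \<in> Kj j" unfolding Kj_def by blast
lemma Kj_E: assumes "x \<in> Kj j" obtains f1 f2 where "x = to_ac f1 + j * to_ac f2"
  using assms unfolding Kj_def by blast

lemma Kj_to_ac: "to_ac f \<in> Kj j" using Kj_I[of f 0] by simp
lemma Kj_j: "j \<in> Kj j" using Kj_I[of 0 1] by simp
lemma Kj_0: "0 \<in> Kj j" using Kj_to_ac[of 0] by simp
lemma Kj_1: "1 \<in> Kj j" using Kj_to_ac[of 1] by simp

lemma Kj_add: "x \<in> Kj j \<Longrightarrow> y \<in> Kj j \<Longrightarrow> x + y \<in> Kj j"
  apply (elim Kj_E) subgoal for f1 f2 g1 g2 using Kj_I[of "f1+g1" "f2+g2"] by (simp add: algebra_simps) done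

lemma Kj_uminus: "x \<in> Kj j \<Longrightarrow> - x \<in> Kj j"
  apply (elim Kj_E) subgoal for f1 f2 using Kj_I[of "-f1" "-f2"] by (simp add: algebra_simps) done

lemma Kj_diff: "x \<in> Kj j \<Longrightarrow> y \<in> Kj j \<Longrightarrow> x - y \<in> Kj j"
  using Kj_add Kj_uminus by (metis diff_conv_add_uminus)

lemma Kj_mult_eq: "(to_ac f1 + j * to_ac f2) * (to_ac g1 + j * to_ac g2) =
   to_ac (f1*g1 + fls_X * f2 * g2) + j * to_ac (f1 * g2 + f2 * g1)"
proof -
  have "(to_ac f1 + j * to_ac f2) * (to_ac g1 + j * to_ac g2) =
     to_ac f1 * to_ac g1 + (j*j) * to_ac f2 * to_ac g2 + j * (to_ac f1 * to_ac g2 + to_ac f2 * to_ac g1)"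
    by (simp add: algebra_simps)
  then show ?thesis by (simp add: jj)
qed

lemma Kj_mult: "x \<in> Kj j \<Longrightarrow> y \<in> Kj j \<Longrightarrow> x * y \<in> Kj j"
  apply (elim Kj_E) subgoal for f1 f2 g1 g2 using Kj_I[of "f1*g1 + fls_X * f2 * g2" "f1 * g2 + f2 * g1"]
     by (simp only: Kj_mult_eq) done

lemma Kj_inverse: "x \<in> Kj j \<Longrightarrow> inverse x \<in> Kj j"
proof (elim Kj_E)
  fix f1 f2 assume x: "x = to_ac f1 + j * to_ac f2"
  show "inverse x \<in> Kj j"
  proof (cases "f1 = 0 \<and> f2 = 0")
    case True then show ?thesis using x Kj_0 by simp
  next
    case False
    define N where "N = f1^2 - fls_X * f2^2"
    have N: "N \<noteq> 0" using False fls_sq_X[of f1 f2] unfolding N_def by auto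
    have Nd: "f1*f1 - fls_X*f2*f2 = N" by (simp add: N_def power2_eq_square algebra_simps)
    have "f1 * (f1 / N) + fls_X * f2 * (- f2 / N) = (f1*f1 - fls_X*f2*f2) / N"
      by (simp add: diff_divide_distrib)
    then have e1: "f1 * (f1 / N) + fls_X * f2 * (- f2 / N) = 1" using N unfolding Nd by simp
    have e2: "f1 * (- f2 / N) + f2 * (f1 / N) = 0" using N
      by (simp add: field_simps)
    have "x * (to_ac (f1 / N) + j * to_ac (- f2 / N)) = 1"
      unfolding x Kj_mult_eq e1 e2 by simp
    then have "inverse x = to_ac (f1 / N) + j * to_ac (- f2 / N)"
      by (metis inverse_unique)
    then show ?thesis using Kj_I[of "f1 / N" "- f2 / N"] by (simp only:)
  qed
qed

lemma conj_in_Kj: "x \<in> Kj j \<Longrightarrow> conjKj j x \<in> Kj j"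
  apply (elim Kj_E) subgoal for f1 f2 using Kj_I[of f1 "-f2"] by (simp add: conjKj_eq) done

lemma conj_add: "x \<in> Kj j \<Longrightarrow> y \<in> Kj j \<Longrightarrow> conjKj j (x + y) = conjKj j x + conjKj j y"
  apply (elim Kj_E) subgoal for f1 f2 g1 g2
    using conjKj_eq[of "f1+g1" "f2+g2"] by (simp add: conjKj_eq algebra_simps) done

lemma conj_mult: "x \<in> Kj j \<Longrightarrow> y \<in> Kj j \<Longrightarrow> conjKj j (x * y) = conjKj j x * conjKj j y"
proof (elim Kj_E)
  fix f1 f2 g1 g2 assume x: "x = to_ac f1 + j * to_ac f2" and y: "y = to_ac g1 + j * to_ac g2"
  have "conjKj j x * conjKj j y = (to_ac f1 + j * to_ac (-f2)) * (to_ac g1 + j * to_ac (-g2))"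
    by (simp add: x y conjKj_eq)
  also have "\<dots> = to_ac (f1*g1 + fls_X * f2 * g2) - j * to_ac (f1 * g2 + f2 * g1)"
    unfolding Kj_mult_eq by (simp add: algebra_simps)
  also have "\<dots> = conjKj j (x*y)" unfolding x y Kj_mult_eq conjKj_eq ..
  finally show ?thesis by simp
qed

lemma conj_to_ac: "conjKj j (to_ac f) = to_ac f"
  using conjKj_eq[of f 0] by simp

lemma conj_1: "conjKj j 1 = 1" using conj_to_ac[of 1] by simp

end

definition subfld :: "'a::field set \<Rightarrow> bool" where
  "subfld E \<longleftrightarrow> 0 \<in> E \<and> 1 \<in> E \<and> (\<forall>a\<in>E. \<forall>b\<in>E. a + b \<in> E \<and> a * b \<in> E) \<and>
     (\<forall>a\<in>E. - a \<in> E \<and> inverse a \<in> E)"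

definition Epoly :: "'a::field set \<Rightarrow> 'a poly \<Rightarrow> bool" where
  "Epoly E p \<longleftrightarrow> (\<forall>i. coeff p i \<in> E)"

definition hom_on :: "'a::field set \<Rightarrow> ('a \<Rightarrow> 'b::field) \<Rightarrow> bool" where
  "hom_on E f \<longleftrightarrow> (\<forall>a\<in>E. \<forall>b\<in>E. f (a + b) = f a + f b \<and> f (a * b) = f a * f b) \<and> f 1 = 1"

section \<open>Subfields\<close>

context fixes E :: "'a::field set" assumes E: "subfld E"
begin
lemma sf0: "0 \<in> E" using E unfolding subfld_def by blast
lemma sf1: "1 \<in> E" using E unfolding subfld_def by blast
lemma sfadd: "a \<in> E \<Longrightarrow> b \<in> E \<Longrightarrow> a + b \<in> E" using E unfolding subfld_def by blast
lemma sfmult: "a \<in> E \<Longrightarrow> b \<in> E \<Longrightarrow> a * b \<in> E" using E unfolding subfld_def by blast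
lemma sfuminus: "a \<in> E \<Longrightarrow> - a \<in> E" using E unfolding subfld_def by blast
lemma sfinverse: "a \<in> E \<Longrightarrow> inverse a \<in> E" using E unfolding subfld_def by blast
lemma sfdiff: "a \<in> E \<Longrightarrow> b \<in> E \<Longrightarrow> a - b \<in> E"
  using sfadd sfuminus by (metis diff_conv_add_uminus)
lemma sfdivide: "a \<in> E \<Longrightarrow> b \<in> E \<Longrightarrow> a / b \<in> E"
  using sfmult sfinverse by (metis divide_inverse)
lemma sfsum: "(\<And>i. i \<in> I \<Longrightarrow> f i \<in> E) \<Longrightarrow> sum f I \<in> E"
  by (induction I rule: infinite_finite_induct) (auto simp: sf0 sfadd)
lemma sfpower: "a \<in> E \<Longrightarrow> a ^ n \<in> E"
  by (induction n) (auto simp: sf1 sfmult)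

lemma Epoly_0: "Epoly E 0" by (simp add: Epoly_def sf0)
lemma Epoly_const: "a \<in> E \<Longrightarrow> Epoly E [:a:]" by (simp add: Epoly_def sf0 coeff_pCons split: nat.splits)
lemma Epoly_pCons: "a \<in> E \<Longrightarrow> Epoly E p \<Longrightarrow> Epoly E (pCons a p)"
  by (simp add: Epoly_def coeff_pCons split: nat.splits)
lemma Epoly_pCons_iff: "Epoly E (pCons a p) \<longleftrightarrow> a \<in> E \<and> Epoly E p"
  unfolding Epoly_def by (auto simp: coeff_pCons split: nat.splits)
lemma Epoly_X: "Epoly E [:0,1:]" by (simp add: Epoly_pCons Epoly_const sf0 sf1)
lemma Epoly_add: "Epoly E p \<Longrightarrow> Epoly E q \<Longrightarrow> Epoly E (p + q)"
  by (simp add: Epoly_def sfadd)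
lemma Epoly_uminus: "Epoly E p \<Longrightarrow> Epoly E (- p)"
  by (simp add: Epoly_def sfuminus)
lemma Epoly_diff: "Epoly E p \<Longrightarrow> Epoly E q \<Longrightarrow> Epoly E (p - q)"
  by (simp add: Epoly_def sfdiff)
lemma Epoly_mult: "Epoly E p \<Longrightarrow> Epoly E q \<Longrightarrow> Epoly E (p * q)"
  unfolding Epoly_def coeff_mult by (auto intro!: sfsum sfmult)
lemma Epoly_smult: "a \<in> E \<Longrightarrow> Epoly E p \<Longrightarrow> Epoly E (smult a p)"
  by (simp add: Epoly_def sfmult)
lemma Epoly_monom: "a \<in> E \<Longrightarrow> Epoly E (monom a k)"
  by (simp add: Epoly_def coeff_monom sf0)
lemma Epoly_poly: "Epoly E p \<Longrightarrow> x \<in> E \<Longrightarrow> poly p x \<in> E"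
  by (induction p) (auto simp: Epoly_pCons_iff sf0 sfadd sfmult)
end

section \<open>Homomorphisms\<close>

context fixes E :: "'a::field set" and f :: "'a \<Rightarrow> 'b::field"
  assumes E: "subfld E" and f: "hom_on E f"
begin
lemma hadd: "a \<in> E \<Longrightarrow> b \<in> E \<Longrightarrow> f (a + b) = f a + f b" using f unfolding hom_on_def by blast
lemma hmult: "a \<in> E \<Longrightarrow> b \<in> E \<Longrightarrow> f (a * b) = f a * f b" using f unfolding hom_on_def by blast
lemma h1: "f 1 = 1" using f unfolding hom_on_def by blast
lemma h0: "f 0 = 0" using hadd[OF sf0[OF E] sf0[OF E]] by (metis add.right_neutral add_left_cancel add_0)
lemma huminus: "a \<in> E \<Longrightarrow> f (- a) = - f a"
  using hadd[OF _ sfuminus[OF E], of a a] h0 by (simp add: eq_neg_iff_add_eq_0 add.commute)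
lemma hdiff: "a \<in> E \<Longrightarrow> b \<in> E \<Longrightarrow> f (a - b) = f a - f b"
  using hadd[OF _ sfuminus[OF E], of a b] huminus[of b] by simp
lemma hsum: "(\<And>i. i \<in> I \<Longrightarrow> g i \<in> E) \<Longrightarrow> f (sum g I) = (\<Sum>i\<in>I. f (g i))"
proof (induction I rule: infinite_finite_induct)
  case (insert x F) then show ?case by (simp add: hadd sfsum[OF E])
qed (auto simp: h0)
lemma hpower: "a \<in> E \<Longrightarrow> f (a ^ n) = f a ^ n"
  by (induction n) (auto simp: h1 hmult sfpower[OF E])
lemma hinj: "a \<in> E \<Longrightarrow> f a = 0 \<Longrightarrow> a = 0"
proof (rule ccontr)
  assume a: "a \<in> E" "f a = 0" "a \<noteq> 0"
  have "f (a * inverse a) = 1" using a(3) h1 by simp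
  then show False using hmult[OF a(1) sfinverse[OF E a(1)]] a(2) by simp
qed
lemma hinverse: "a \<in> E \<Longrightarrow> f (inverse a) = inverse (f a)"
proof (cases "a = 0")
  case True then show ?thesis by (simp add: h0)
next
  case False
  assume a: "a \<in> E"
  have "f a * f (inverse a) = 1" using hmult[OF a sfinverse[OF E a]] False h1 by simp
  then show ?thesis by (metis inverse_unique)
qed

lemma coeff_map_h: "coeff (map_poly f p) i = f (coeff p i)"
  by (simp add: coeff_map_poly h0)

lemma map_add: "Epoly E p \<Longrightarrow> Epoly E q \<Longrightarrow> map_poly f (p + q) = map_poly f p + map_poly f q"
  by (rule poly_eqI) (simp add: coeff_map_h hadd Epoly_def)
lemma map_diff: "Epoly E p \<Longrightarrow> Epoly E q \<Longrightarrow> map_poly f (p - q) = map_poly f p - map_poly f q"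
  by (rule poly_eqI) (simp add: coeff_map_h hdiff Epoly_def)
lemma map_mult: "Epoly E p \<Longrightarrow> Epoly E q \<Longrightarrow> map_poly f (p * q) = map_poly f p * map_poly f q"
  by (rule poly_eqI) (simp add: coeff_map_h coeff_mult hsum hmult Epoly_def sfmult[OF E])
lemma map_const: "map_poly f [:a:] = [:f a:]"
  by (rule poly_eqI) (simp add: coeff_map_h coeff_pCons h0 split: nat.splits)
lemma map_X: "map_poly f [:0,1:] = [:0,1:]"
  by (rule poly_eqI) (simp add: coeff_map_h coeff_pCons h0 h1 split: nat.splits)
lemma map_pCons: "map_poly f (pCons a p) = pCons (f a) (map_poly f p)"
  by (simp add: map_poly_pCons h0)

lemma poly_hom: "Epoly E p \<Longrightarrow> x \<in> E \<Longrightarrow> f (poly p x) = poly (map_poly f p) (f x)"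
proof (induction p)
  case 0 then show ?case by (simp add: h0)
next
  case (pCons a p)
  have pe: "poly p x \<in> E" using pCons Epoly_pCons_iff[OF E] Epoly_poly[OF E] by blast
  show ?case using pCons by (simp add: map_pCons Epoly_pCons_iff[OF E] hadd hmult sfmult[OF E] pe)
qed
end

definition algE :: "'a::field set \<Rightarrow> 'a \<Rightarrow> bool" where
  "algE E y \<longleftrightarrow> (\<exists>q. Epoly E q \<and> q \<noteq> 0 \<and> poly q y = 0)"

definition is_minpoly :: "'a::field set \<Rightarrow> 'a \<Rightarrow> 'a poly \<Rightarrow> bool" where
  "is_minpoly E y m \<longleftrightarrow> Epoly E m \<and> lead_coeff m = 1 \<and> poly m y = 0 \<and>
     (\<forall>q. Epoly E q \<and> q \<noteq> 0 \<and> poly q y = 0 \<longrightarrow> degree m \<le> degree q)"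

definition ext :: "'a::field set \<Rightarrow> 'a \<Rightarrow> 'a set" where
  "ext E y = {poly q y | q. Epoly E q}"

context fixes E :: "'a::field set" assumes E: "subfld E"
begin

lemma minpoly_exists: assumes "algE E y" shows "\<exists>m. is_minpoly E y m"
proof -
  define P where "P d \<longleftrightarrow> (\<exists>q. Epoly E q \<and> q \<noteq> 0 \<and> poly q y = 0 \<and> degree q = d)" for d
  have "\<exists>d. P d" using assms unfolding algE_def P_def by blast
  then have "P (LEAST d. P d)" by (rule LeastI_ex)
  then obtain q where q: "Epoly E q" "q \<noteq> 0" "poly q y = 0" "degree q = (LEAST d. P d)"
    unfolding P_def by blast
  define m where "m = smult (inverse (lead_coeff q)) q"
  have lc: "lead_coeff q \<in> E" using q(1) unfolding Epoly_def by blast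
  have "is_minpoly E y m"
    unfolding is_minpoly_def
  proof (intro conjI allI impI)
    show "Epoly E m" unfolding m_def by (rule Epoly_smult[OF E sfinverse[OF E lc] q(1)])
    show "lead_coeff m = 1" using q(2) unfolding m_def by simp
    show "poly m y = 0" using q(3) unfolding m_def by simp
    fix r assume r: "Epoly E r \<and> r \<noteq> 0 \<and> poly r y = 0"
    then have "P (degree r)" unfolding P_def by blast
    then have "(LEAST d. P d) \<le> degree r" by (rule Least_le)
    then show "degree m \<le> degree r" using q(2,4) unfolding m_def by simp
  qed
  then show ?thesis by blast
qed

lemma div_monic:
  assumes m: "Epoly E m" "lead_coeff m = 1"
  shows "Epoly E p \<Longrightarrow> \<exists>s r. Epoly E s \<and> Epoly E r \<and> p = m * s + r \<and> (r = 0 \<or> degree r < degree m)"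
proof (induction "degree p" arbitrary: p rule: less_induct)
  case less
  show ?case
  proof (cases "p = 0 \<or> degree p < degree m")
    case True
    then show ?thesis using less(2) Epoly_0[OF E] by (intro exI[of _ 0] exI[of _ p]) auto
  next
    case False
    then have p0: "p \<noteq> 0" and dp: "degree m \<le> degree p" by auto
    define k where "k = degree p - degree m"
    define p' where "p' = p - monom (lead_coeff p) k * m"
    have lcE: "lead_coeff p \<in> E" using less(2) unfolding Epoly_def by blast
    have Ep': "Epoly E p'" unfolding p'_def
      by (intro Epoly_diff[OF E] Epoly_mult[OF E] Epoly_monom[OF E] less(2) m(1) lcE)
    have c: "coeff p' i = 0" if "i \<ge> degree p" for i
    proof (cases "i = degree p")
      case True
      then show ?thesis unfolding p'_def using dp m(2) by (simp add: coeff_monom_mult k_def)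
    next
      case False
      then have "i > degree p" using that by simp
      have "coeff m (i - k) = 0" using \<open>i > degree p\<close> dp unfolding k_def by (intro coeff_eq_0) linarith
      then show ?thesis unfolding p'_def using \<open>i > degree p\<close>
        by (simp add: coeff_monom_mult coeff_eq_0)
    qed
    have "p' = 0 \<or> degree p' < degree p"
    proof (rule ccontr)
      assume "\<not> ?thesis"
      then have "p' \<noteq> 0" "degree p' \<ge> degree p" by auto
      then show False using c[of "degree p'"] by simp
    qed
    then obtain s r where sr: "Epoly E s" "Epoly E r" "p' = m * s + r" "r = 0 \<or> degree r < degree m"
    proof
      assume "p' = 0"
      then show ?thesis using that[of 0 0] Epoly_0[OF E] by simp
    next
      assume "degree p' < degree p"
      from less(1)[OF this Ep'] obtain s r where "Epoly E s" "Epoly E r" "p' = m * s + r" "r = 0 \<or> degree r < degree m"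
        by blast
      then show ?thesis by (rule that)
    qed
    have "p = m * (s + monom (lead_coeff p) k) + r" using sr(3) unfolding p'_def
      by (simp add: algebra_simps)
    then show ?thesis using sr(2,4) Epoly_add[OF E sr(1) Epoly_monom[OF E lcE]]
      by (intro exI[of _ "s + monom (lead_coeff p) k"] exI[of _ r]) simp
  qed
qed

lemma minpoly_dvd:
  assumes m: "is_minpoly E y m" and q: "Epoly E q" "poly q y = 0"
  shows "\<exists>s. Epoly E s \<and> q = m * s"
proof -
  from m have mE: "Epoly E m" "lead_coeff m = 1" "poly m y = 0" unfolding is_minpoly_def by auto
  obtain s r where sr: "Epoly E s" "Epoly E r" "q = m * s + r" "r = 0 \<or> degree r < degree m"
    using div_monic[OF mE(1,2) q(1)] by blast
  have "poly r y = 0" using q(2) sr(3) mE(3) by (simp add: poly_mult poly_add) 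
  have "r = 0"
  proof (rule ccontr)
    assume "r \<noteq> 0"
    then have "degree m \<le> degree r" using m sr(2) \<open>poly r y = 0\<close> unfolding is_minpoly_def by blast
    then show False using sr(4) \<open>r \<noteq> 0\<close> by simp
  qed
  then show ?thesis using sr by auto
qed

lemma minpoly_degree: assumes "is_minpoly E y m" shows "degree m > 0"
proof (rule ccontr)
  assume "\<not> degree m > 0"
  then have "degree m = 0" by simp
  then have "m = [:1:]" using assms unfolding is_minpoly_def
    by (metis degree_0_id)
  then show False using assms unfolding is_minpoly_def by simp
qed

lemma ext_E: "a \<in> E \<Longrightarrow> a \<in> ext E y"
  unfolding ext_def using Epoly_const[OF E] by (intro CollectI exI[of _ "[:a:]"]) auto
lemma ext_y: "y \<in> ext E y"
  unfolding ext_def using Epoly_X[OF E] by (intro CollectI exI[of _ "[:0,1:]"]) auto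
lemma ext_add: assumes "a \<in> ext E y" "b \<in> ext E y" shows "a + b \<in> ext E y"
proof -
  obtain p where p: "Epoly E p" "a = poly p y" using assms(1) unfolding ext_def by blast
  obtain q where q: "Epoly E q" "b = poly q y" using assms(2) unfolding ext_def by blast
  have "a + b = poly (p + q) y" by (simp add: p q)
  then show ?thesis unfolding ext_def using Epoly_add[OF E p(1) q(1)] by blast
qed
lemma ext_mult: assumes "a \<in> ext E y" "b \<in> ext E y" shows "a * b \<in> ext E y"
proof -
  obtain p where p: "Epoly E p" "a = poly p y" using assms(1) unfolding ext_def by blast
  obtain q where q: "Epoly E q" "b = poly q y" using assms(2) unfolding ext_def by blast
  have "a * b = poly (p * q) y" by (simp add: p q)
  then show ?thesis unfolding ext_def using Epoly_mult[OF E p(1) q(1)] by blast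
qed
lemma ext_uminus: assumes "a \<in> ext E y" shows "- a \<in> ext E y"
proof -
  obtain p where p: "Epoly E p" "a = poly p y" using assms(1) unfolding ext_def by blast
  have "- a = poly (- p) y" by (simp add: p)
  then show ?thesis unfolding ext_def using Epoly_uminus[OF E p(1)] by blast
qed
lemma ext_poly: "Epoly E h \<Longrightarrow> a \<in> ext E y \<Longrightarrow> poly h a \<in> ext E y"
  by (induction h) (auto simp: Epoly_pCons_iff[OF E] ext_add ext_mult ext_E sf0[OF E])

lemma ext_inverse:
  assumes a: "a \<in> ext E y" and alg: "algE E a"
  shows "inverse a \<in> ext E y"
proof (cases "a = 0")
  case True then show ?thesis using ext_E[OF sf0[OF E]] by simp
next
  case False
  obtain g where g: "is_minpoly E a g" using minpoly_exists[OF alg] by blast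
  obtain c g' where cg: "g = pCons c g'" by (cases g)
  have gE: "Epoly E g" "lead_coeff g = 1" "poly g a = 0" using g unfolding is_minpoly_def by auto
  have cE: "c \<in> E" "Epoly E g'" using gE(1) unfolding cg Epoly_pCons_iff[OF E] by auto
  have "c \<noteq> 0"
  proof
    assume c: "c = 0"
    have "poly g' a = 0" using gE(3) False unfolding cg c by simp
    have "g' \<noteq> 0" using gE(2) unfolding cg c by auto
    then have "degree g = degree g' + 1" unfolding cg by simp
    moreover have "degree g \<le> degree g'" using g cE(2) \<open>g' \<noteq> 0\<close> \<open>poly g' a = 0\<close>
      unfolding is_minpoly_def by blast
    ultimately show False by simp
  qed
  have "c + a * poly g' a = 0" using gE(3) unfolding cg by simp
  then have ag: "a * poly g' a = - c" by (simp add: eq_neg_iff_add_eq_0 add.commute)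
  have "a * poly (smult (- inverse c) g') a = - inverse c * (a * poly g' a)" by simp
  also have "\<dots> = 1" using \<open>c \<noteq> 0\<close> unfolding ag by simp
  finally have "a * poly (smult (- inverse c) g') a = 1" .
  then have "inverse a = poly (smult (- inverse c) g') a" by (metis inverse_unique)
  then show ?thesis using ext_poly[OF Epoly_smult[OF E sfuminus[OF E sfinverse[OF E cE(1)]] cE(2)] a] by simp
qed

lemma ext_subfld: assumes "\<And>a. algE E a" shows "subfld (ext E y)"
  unfolding subfld_def
  by (intro conjI ballI ext_E[OF sf0[OF E]] ext_E[OF sf1[OF E]] ext_add ext_mult ext_uminus ext_inverse assms)

lemma ext_sup: "E \<subseteq> ext E y" using ext_E by blast

end

lemma step:
  fixes E :: "'a::field set" and \<phi> :: "'a \<Rightarrow> 'b::field"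
  assumes E: "subfld E" and h: "hom_on E \<phi>" and m: "is_minpoly E y m"
    and z: "poly (map_poly \<phi> m) z = 0"
  shows "\<exists>\<psi>. hom_on (ext E y) \<psi> \<and> (\<forall>a\<in>E. \<psi> a = \<phi> a) \<and> \<psi> y = z"
proof -
  define \<Phi> where "\<Phi> q = poly (map_poly \<phi> q) z" for q
  have key: "\<Phi> p = \<Phi> q" if pq: "Epoly E p" "Epoly E q" "poly p y = poly q y" for p q
  proof -
    have "poly (p - q) y = 0" using pq by simp
    then obtain s where s: "Epoly E s" "p - q = m * s"
      using minpoly_dvd[OF E m Epoly_diff[OF E pq(1,2)]] by blast
    have mE: "Epoly E m" using m unfolding is_minpoly_def by blast
    have "map_poly \<phi> p - map_poly \<phi> q = map_poly \<phi> m * map_poly \<phi> s"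
      using map_diff[OF E h pq(1,2)] map_mult[OF E h mE s(1)] s(2) by simp
    then have "\<Phi> p - \<Phi> q = 0" unfolding \<Phi>_def using z
      by (metis mult_zero_left poly_diff poly_mult)
    then show ?thesis by simp
  qed
  define \<psi> where "\<psi> a = \<Phi> (SOME q. Epoly E q \<and> poly q y = a)" for a
  have \<psi>: "\<psi> (poly q y) = \<Phi> q" if "Epoly E q" for q
  proof -
    have ex: "\<exists>q'. Epoly E q' \<and> poly q' y = poly q y" using that by blast
    have "Epoly E (SOME q'. Epoly E q' \<and> poly q' y = poly q y) \<and> poly (SOME q'. Epoly E q' \<and> poly q' y = poly q y) y = poly q y"
      by (rule someI_ex[OF ex])
    then show ?thesis unfolding \<psi>_def using key[OF _ that] by blast
  qed
  have "hom_on (ext E y) \<psi>"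
    unfolding hom_on_def
  proof (intro conjI ballI)
    fix a b assume "a \<in> ext E y" "b \<in> ext E y"
    then obtain p q where pq: "Epoly E p" "Epoly E q" "a = poly p y" "b = poly q y"
      unfolding ext_def by blast
    have "\<psi> (a + b) = \<Phi> (p + q)" using \<psi>[OF Epoly_add[OF E pq(1,2)]] pq by simp
    then show "\<psi> (a + b) = \<psi> a + \<psi> b" using \<psi> pq map_add[OF E h pq(1,2)] unfolding \<Phi>_def by simp
    have "\<psi> (a * b) = \<Phi> (p * q)" using \<psi>[OF Epoly_mult[OF E pq(1,2)]] pq by simp
    then show "\<psi> (a * b) = \<psi> a * \<psi> b" using \<psi> pq map_mult[OF E h pq(1,2)] unfolding \<Phi>_def by simp
  next
    show "\<psi> 1 = 1" using \<psi>[OF Epoly_const[OF E sf1[OF E]]] map_const[OF E h] h1[OF E h] unfolding \<Phi>_def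
      by simp
  qed
  moreover have "\<psi> a = \<phi> a" if "a \<in> E" for a
    using \<psi>[OF Epoly_const[OF E that]] map_const[OF E h] unfolding \<Phi>_def by simp
  moreover have "\<psi> y = z"
    using \<psi>[OF Epoly_X[OF E]] map_X[OF E h] unfolding \<Phi>_def by simp
  ultimately show ?thesis by blast
qed

lemma alg_all:
  fixes E :: "L set"
  assumes E: "subfld E" and K: "range to_ac \<subseteq> E"
  shows "algE E y"
proof -
  obtain p :: "complex fls poly" where p: "p \<noteq> 0" "poly (map_poly to_ac p) y = 0"
    by (rule alg_closure_algebraic)
  have "Epoly E (map_poly to_ac p)" unfolding Epoly_def using K by (auto simp: coeff_map_poly)
  moreover have "map_poly to_ac p \<noteq> 0"
  proof -
    have "coeff (map_poly to_ac p) (degree p) \<noteq> 0" using p(1) by (simp add: coeff_map_poly)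
    then show ?thesis by (metis coeff_0)
  qed
  ultimately show ?thesis unfolding algE_def using p(2) by blast
qed

lemma root_exists:
  fixes E :: "L set" and \<phi> :: "L \<Rightarrow> L"
  assumes E: "subfld E" and h: "hom_on E \<phi>" and m: "is_minpoly E y m"
  shows "\<exists>z. poly (map_poly \<phi> m) z = 0"
proof -
  have "lead_coeff m = 1" using m unfolding is_minpoly_def by blast
  then have "degree (map_poly \<phi> m) = degree m" using h1[OF E h] by (intro map_poly_degree_eq) simp
  then have "degree (map_poly \<phi> m) > 0" using minpoly_degree[OF E m] by simp
  then show ?thesis by (rule alg_closed_imp_poly_has_root)
qed

definition graph :: "L set \<Rightarrow> (L \<Rightarrow> L) \<Rightarrow> (L \<times> L) set" where
  "graph E f = {(a, f a) | a. a \<in> E}"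

lemma graph_sub: "graph E f \<subseteq> graph E' f' \<Longrightarrow> E \<subseteq> E' \<and> (\<forall>a\<in>E. f' a = f a)"
  unfolding graph_def by auto

lemma subfld_UNIV: "subfld (UNIV :: 'a::field set)" unfolding subfld_def by simp

theorem extension:
  fixes E0 :: "L set" and \<phi>0 :: "L \<Rightarrow> L"
  assumes E0: "subfld E0" and K: "range to_ac \<subseteq> E0" and h0: "hom_on E0 \<phi>0"
  shows "\<exists>\<sigma>. hom_on UNIV \<sigma> \<and> (\<forall>a\<in>E0. \<sigma> a = \<phi>0 a)"
proof -
  define good where "good E f \<longleftrightarrow> subfld E \<and> E0 \<subseteq> E \<and> hom_on E f \<and> (\<forall>a\<in>E0. f a = \<phi>0 a)"
    for E f
  define A where "A = {graph E f | E f. good E f}"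
  have "good E0 \<phi>0" unfolding good_def using E0 h0 by simp
  then have A0: "graph E0 \<phi>0 \<in> A" unfolding A_def by blast
  have "\<forall>C\<in>chains A. \<exists>U\<in>A. \<forall>G\<in>C. G \<subseteq> U"
  proof
    fix C assume C: "C \<in> chains A"
    then have CA: "C \<subseteq> A" and ch: "\<And>G H. G \<in> C \<Longrightarrow> H \<in> C \<Longrightarrow> G \<subseteq> H \<or> H \<subseteq> G"
      unfolding chains_def chain_subset_def by auto
    show "\<exists>U\<in>A. \<forall>G\<in>C. G \<subseteq> U"
    proof (cases "C = {}")
      case True then show ?thesis using A0 by blast
    next
      case False
      define U where "U = \<Union>C"
      have gr: "\<exists>E f. G = graph E f \<and> good E f" if GC: "G \<in> C" for G
      proof -
        have "G \<in> A" using GC CA by (rule subsetD[rotated])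
        then show ?thesis unfolding A_def by simp
      qed
      have two: "\<exists>W\<in>C. p \<in> W \<and> q \<in> W" if pq: "p \<in> U" "q \<in> U" for p q
      proof -
        obtain G where G: "G \<in> C" "p \<in> G" using pq(1) unfolding U_def by (rule UnionE) 
        obtain H where H: "H \<in> C" "q \<in> H" using pq(2) unfolding U_def by (rule UnionE)
        show ?thesis
        proof (cases "G \<subseteq> H")
          case True then show ?thesis using G H by blast
        next
          case False then have "H \<subseteq> G" using ch[OF G(1) H(1)] by simp
          then show ?thesis using G H by blast
        qed
      qed
      have fnc: "b = c" if abc: "(a,b) \<in> U" "(a,c) \<in> U" for a b c
      proof -
        obtain W where W: "W \<in> C" "(a,b) \<in> W" "(a,c) \<in> W" using two[OF abc] by blast
        obtain E f where "W = graph E f" using gr[OF W(1)] by blast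
        then show ?thesis using W(2,3) unfolding graph_def by simp
      qed
      define E where "E = {a. \<exists>b. (a,b) \<in> U}"
      define f where "f a = (THE b. (a,b) \<in> U)" for a
      have fU: "(a, f a) \<in> U" if aE: "a \<in> E" for a
      proof -
        obtain b where b: "(a,b) \<in> U" using aE unfolding E_def by blast
        have "f a = b" unfolding f_def
        proof (rule the_equality)
          show "(a, b) \<in> U" by (rule b)
          show "\<And>c. (a, c) \<in> U \<Longrightarrow> c = b" using fnc b by blast
        qed
        then show ?thesis using b by simp
      qed
      have inU: "(a, g a) \<in> U" if "W \<in> C" "W = graph E' g" "a \<in> E'" for W E' g a
      proof -
        have "(a, g a) \<in> W" using that(2,3) unfolding graph_def by blast
        then show ?thesis unfolding U_def using that(1) by blast
      qed
      have inE: "a \<in> E" if "W \<in> C" "W = graph E' g" "a \<in> E'" for W E' g a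
        using inU[OF that] unfolding E_def by blast
      have fZ: "f a = g a" if "W \<in> C" "W = graph E' g" "a \<in> E'" for W E' g a
        using fnc[OF fU[OF inE[OF that]] inU[OF that]] .
      have common: "\<exists>W E' g. W \<in> C \<and> W = graph E' g \<and> good E' g \<and> a \<in> E' \<and> b \<in> E'"
        if ab: "a \<in> E" "b \<in> E" for a b
      proof -
        obtain W where W: "W \<in> C" "(a, f a) \<in> W" "(b, f b) \<in> W" using two[OF fU[OF ab(1)] fU[OF ab(2)]] by blast
        obtain E' g where Eg: "W = graph E' g" "good E' g" using gr[OF W(1)] by blast
        have "a \<in> E'" "b \<in> E'" using W(2,3) unfolding Eg(1) graph_def by auto
        then show ?thesis using W(1) Eg by blast
      qed
      obtain W0 where W0: "W0 \<in> C" using False by blast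
      obtain E1 g1 where W0g: "W0 = graph E1 g1" "good E1 g1" using gr[OF W0] by blast
      have E01: "E0 \<subseteq> E1" and g10: "\<forall>a\<in>E0. g1 a = \<phi>0 a" using W0g(2) by (simp_all add: good_def)
      have E0E: "E0 \<subseteq> E" using inE[OF W0 W0g(1)] E01 by blast
      have f0: "\<forall>a\<in>E0. f a = \<phi>0 a" using fZ[OF W0 W0g(1)] E01 g10 by auto
      have sE: "subfld E"
        unfolding subfld_def
      proof (intro conjI ballI)
        show "0 \<in> E" "1 \<in> E" using E0E sf0[OF E0] sf1[OF E0] by blast+
        fix a b assume ab: "a \<in> E" "b \<in> E"
        then obtain W E' g where W: "W \<in> C" "W = graph E' g" "good E' g" "a \<in> E'" "b \<in> E'"
          using common by blast
        have sE': "subfld E'" using W(3) by (simp add: good_def)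
        show "a + b \<in> E" by (rule inE[OF W(1,2) sfadd[OF sE' W(4,5)]])
        show "a * b \<in> E" by (rule inE[OF W(1,2) sfmult[OF sE' W(4,5)]])
      next
        fix a assume "a \<in> E"
        then obtain W E' g where W: "W \<in> C" "W = graph E' g" "good E' g" "a \<in> E'" "a \<in> E'"
          using common by blast
        have sE': "subfld E'" using W(3) by (simp add: good_def)
        show "- a \<in> E" by (rule inE[OF W(1,2) sfuminus[OF sE' W(4)]])
        show "inverse a \<in> E" by (rule inE[OF W(1,2) sfinverse[OF sE' W(4)]])
      qed
      have hE: "hom_on E f"
        unfolding hom_on_def
      proof (intro conjI ballI)
        fix a b assume ab: "a \<in> E" "b \<in> E"
        then obtain W E' g where W: "W \<in> C" "W = graph E' g" "good E' g" "a \<in> E'" "b \<in> E'"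
          using common by blast
        have sE': "subfld E'" and hg: "hom_on E' g" using W(3) by (simp_all add: good_def)
        have fa: "f a = g a" "f b = g b" using fZ[OF W(1,2)] W(4,5) by auto
        have "f (a + b) = g (a + b)" by (rule fZ[OF W(1,2) sfadd[OF sE' W(4,5)]])
        then show "f (a + b) = f a + f b" using hadd[OF sE' hg W(4,5)] fa by simp
        have "f (a * b) = g (a * b)" by (rule fZ[OF W(1,2) sfmult[OF sE' W(4,5)]])
        then show "f (a * b) = f a * f b" using hmult[OF sE' hg W(4,5)] fa by simp
      next
        have s1: "subfld E1" and hg1: "hom_on E1 g1" using W0g(2) by (simp_all add: good_def)
        have "f 1 = g1 1" by (rule fZ[OF W0 W0g(1) sf1[OF s1]])
        then show "f 1 = 1" using h1[OF s1 hg1] by simp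
      qed
      have "U = graph E f"
      proof
        show "U \<subseteq> graph E f"
        proof
          fix p assume p: "p \<in> U"
          obtain a b where ab: "p = (a,b)" by (cases p)
          then have aE: "a \<in> E" using p unfolding E_def by blast
          have "b = f a" using fnc[OF _ fU[OF aE]] p ab by blast
          then show "p \<in> graph E f" using aE ab unfolding graph_def by blast
        qed
        show "graph E f \<subseteq> U" unfolding graph_def using fU by blast
      qed
      moreover have "good E f" unfolding good_def using sE E0E hE f0 by simp
      ultimately have "U \<in> A" unfolding A_def by blast
      moreover have "\<forall>G\<in>C. G \<subseteq> U" unfolding U_def by blast
      ultimately show ?thesis by blast
    qed
  qed
  then have "\<exists>M\<in>A. \<forall>G\<in>A. M \<subseteq> G \<longrightarrow> G = M" by (rule Zorn_Lemma2)
  then obtain M where M: "M \<in> A" "\<And>G. G \<in> A \<Longrightarrow> M \<subseteq> G \<Longrightarrow> G = M"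
    by auto
  from M(1) obtain E f where Mg: "M = graph E f" "good E f" unfolding A_def by blast
  have sE: "subfld E" using Mg(2) by (simp add: good_def)
  have E0E: "E0 \<subseteq> E" using Mg(2) by (simp add: good_def)
  have hf: "hom_on E f" using Mg(2) by (simp add: good_def)
  have f0: "\<forall>a\<in>E0. f a = \<phi>0 a" using Mg(2) by (simp add: good_def)
  have KE: "range to_ac \<subseteq> E" using K E0E by (rule subset_trans)
  have "E = UNIV"
  proof (rule ccontr)
    assume "E \<noteq> UNIV"
    then obtain y where y: "y \<notin> E" by blast
    obtain m where m: "is_minpoly E y m" using minpoly_exists[OF sE alg_all[OF sE KE]] by blast
    obtain z where z: "poly (map_poly f m) z = 0" using root_exists[OF sE hf m] by blast
    obtain \<psi> where \<psi>: "hom_on (ext E y) \<psi>" "\<forall>a\<in>E. \<psi> a = f a" "\<psi> y = z"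
      using step[OF sE hf m z] by blast
    have s1: "subfld (ext E y)" by (rule ext_subfld[OF sE alg_all[OF sE KE]])
    have s2: "E0 \<subseteq> ext E y" using E0E ext_sup[OF sE] by (rule subset_trans)
    have s3: "\<forall>a\<in>E0. \<psi> a = \<phi>0 a" using E0E \<psi>(2) f0 by auto
    have "good (ext E y) \<psi>" unfolding good_def using s1 s2 s3 \<psi>(1) by simp
    then have G: "graph (ext E y) \<psi> \<in> A" unfolding A_def by blast
    have "M \<subseteq> graph (ext E y) \<psi>"
    proof
      fix p assume "p \<in> M"
      then obtain a where a: "a \<in> E" "p = (a, f a)" unfolding Mg(1) graph_def by blast
      then have "p = (a, \<psi> a)" "a \<in> ext E y" using \<psi>(2) ext_sup[OF sE] by auto
      then show "p \<in> graph (ext E y) \<psi>" unfolding graph_def by blast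
    qed
    then have "graph (ext E y) \<psi> = M" using M(2)[OF G] by simp
    moreover have "(y, \<psi> y) \<in> graph (ext E y) \<psi>" using ext_y[OF sE] unfolding graph_def by blast
    ultimately have "(y, \<psi> y) \<in> graph E f" unfolding Mg(1) by simp
    then show False using y unfolding graph_def by auto
  qed
  then have "hom_on UNIV f" using hf by simp
  then show ?thesis using f0 by (intro exI[of _ f]) simp
qed

lemma hom_UNIV_poly:
  fixes \<sigma> :: "'a::field \<Rightarrow> 'a"
  assumes "hom_on UNIV \<sigma>"
  shows "\<sigma> (poly p x) = poly (map_poly \<sigma> p) (\<sigma> x)"
  using poly_hom[OF subfld_UNIV assms] unfolding Epoly_def by simp

theorem surj_hom:
  fixes \<sigma> :: "L \<Rightarrow> L"
  assumes h: "hom_on UNIV \<sigma>" and fx: "\<And>f. \<sigma> (to_ac f) = to_ac f"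
  shows "bij \<sigma>"
proof -
  have inj: "inj \<sigma>"
  proof (rule injI)
    fix a b assume "\<sigma> a = \<sigma> b"
    then have "\<sigma> (a - b) = 0" using hdiff[OF subfld_UNIV h] by simp
    then show "a = b" using hinj[OF subfld_UNIV h] by (metis UNIV_I eq_iff_diff_eq_0)
  qed
  have "surj \<sigma>"
  proof
    show "range \<sigma> \<subseteq> UNIV" by simp
    show "UNIV \<subseteq> range \<sigma>"
    proof
      fix y :: L
      obtain p :: "complex fls poly" where p: "p \<noteq> 0" "poly (map_poly to_ac p) y = 0"
        by (rule alg_closure_algebraic)
      define q where "q = map_poly to_ac p"
      have q0: "q \<noteq> 0"
      proof -
        have "coeff (map_poly to_ac p) (degree p) \<noteq> 0" using p(1) by (simp add: coeff_map_poly)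
        then show ?thesis unfolding q_def by (metis coeff_0)
      qed
      have mq: "map_poly \<sigma> q = q"
        unfolding q_def by (rule poly_eqI) (simp add: coeff_map_h[OF subfld_UNIV h] coeff_map_poly fx)
      define R where "R = {x. poly q x = 0}"
      have fin: "finite R" unfolding R_def using poly_roots_finite[OF q0] .
      have "\<sigma> ` R \<subseteq> R"
      proof
        fix w assume "w \<in> \<sigma> ` R"
        then obtain x where x: "poly q x = 0" "w = \<sigma> x" unfolding R_def by blast
        then have "poly q w = \<sigma> (poly q x)" using hom_UNIV_poly[OF h, of q x] mq by simp
        then show "w \<in> R" using x h0[OF subfld_UNIV h] unfolding R_def by simp
      qed
      then have "\<sigma> ` R = R" using endo_inj_surj[OF fin] inj inj_on_subset by blast
      moreover have "y \<in> R" unfolding R_def q_def using p(2) by simp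
      ultimately show "y \<in> range \<sigma>" by blast
    qed
  qed
  then show ?thesis using inj by (simp add: bij_def)
qed

lemma field_aut_I:
  assumes "hom_on UNIV \<sigma>" "bij \<sigma>"
  shows "field_aut \<sigma>"
  using assms unfolding field_aut_def hom_on_def by simp

lemma other_root:
  fixes F :: "L set"
  assumes F: "subfld F" and K: "range to_ac \<subseteq> F" and x: "x \<notin> F" and m: "is_minpoly F x m"
  shows "\<exists>x'. poly m x' = 0 \<and> x' \<noteq> x"
proof (rule ccontr)
  assume "\<not> ?thesis"
  then have allx: "\<And>a. poly m a = 0 \<Longrightarrow> a = x" by blast
  have mE: "Epoly F m" "lead_coeff m = 1" using m unfolding is_minpoly_def by auto
  have m0: "m \<noteq> 0" using mE(2) by auto
  define d where "d = degree m"
  have d0: "d > 0" using minpoly_degree[OF F m] unfolding d_def .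
  obtain A where A: "size A = degree m" "m = smult (lead_coeff m) (\<Prod>a\<in>#A. [:- a, 1:])"
    using alg_closed_imp_factorization[OF m0] by blast
  have mP: "m = (\<Prod>a\<in>#A. [:- a, 1:])" using A(2) unfolding mE(2) by simp
  have Ax: "set_mset A \<subseteq> {x}"
  proof
    fix a assume a: "a \<in> set_mset A"
    have "poly m a = (\<Prod>b\<in>#A. poly [:- b, 1:] a)"
      by (subst mP) (rule poly_prod_mset)
    also have "\<dots> = 0"
      unfolding prod_mset_zero_iff
    proof -
      have "poly [:- a, 1:] a \<in># image_mset (\<lambda>b. poly [:- b, 1:] a) A" using a by simp
      moreover have "poly [:- a, 1:] a = 0" by simp
      ultimately show "0 \<in># image_mset (\<lambda>b. poly [:- b, 1:] a) A" by simp
    qed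
    finally have "a = x" by (rule allx)
    then show "a \<in> {x}" by simp
  qed
  have "image_mset (\<lambda>a. [:- a, 1:]) A = image_mset (\<lambda>a. [:- x, 1:]) A"
    using Ax by (intro image_mset_cong) auto
  also have "\<dots> = replicate_mset d [:- x, 1:]" using A(1) unfolding d_def by (simp only: image_mset_const_eq)
  finally have md: "m = [:- x, 1:] ^ d" using mP by simp
  have bin: "d choose (d - 1) = d" using binomial_symmetric[of "d - 1" d] d0 by simp
  have "coeff m (d - 1) = of_nat (d choose (d - 1)) * 1 ^ (d - 1) * (- x) ^ (d - (d - 1))"
    unfolding md by (rule coeff_linear_poly_power) simp
  also have "\<dots> = - (of_nat d * x)" using d0 unfolding bin by simp
  finally have c: "coeff m (d - 1) = - (of_nat d * x)" .
  have "of_nat d \<in> F"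
  proof -
    have "(of_nat d :: L) = to_ac (of_nat d)" by simp
    then show ?thesis using K by (metis rangeI subsetD)
  qed
  moreover have "coeff m (d - 1) \<in> F" using mE(1) unfolding Epoly_def by blast
  ultimately have "- coeff m (d - 1) / of_nat d \<in> F" by (intro sfdivide[OF F] sfuminus[OF F])
  moreover have "- coeff m (d - 1) / of_nat d = x" unfolding c using d0 by simp
  ultimately show False using x by simp
qed

theorem fixed_field:
  fixes F :: "L set"
  assumes F: "subfld F" and K: "range to_ac \<subseteq> F" and x: "x \<notin> F"
  shows "\<exists>\<sigma>. field_aut \<sigma> \<and> (\<forall>a\<in>F. \<sigma> a = a) \<and> \<sigma> x \<noteq> x"
proof -
  obtain m where m: "is_minpoly F x m" using minpoly_exists[OF F alg_all[OF F K]] by blast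
  obtain x' where x': "poly m x' = 0" "x' \<noteq> x" using other_root[OF F K x m] by blast
  have hid: "hom_on F id" unfolding hom_on_def by simp
  have "poly (map_poly id m) x' = 0" using x' by simp
  from step[OF F hid m this] obtain \<psi> where \<psi>: "hom_on (ext F x) \<psi>" "\<forall>a\<in>F. \<psi> a = a" "\<psi> x = x'"
    by auto
  have sF': "subfld (ext F x)" by (rule ext_subfld[OF F alg_all[OF F K]])
  have K': "range to_ac \<subseteq> ext F x" using K ext_sup[OF F] by (rule subset_trans)
  obtain \<sigma> where \<sigma>: "hom_on UNIV \<sigma>" "\<forall>a\<in>ext F x. \<sigma> a = \<psi> a" using extension[OF sF' K' \<psi>(1)] by blast
  have fixF: "\<forall>a\<in>F. \<sigma> a = a"
  proof
    fix a assume a: "a \<in> F"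
    then have "a \<in> ext F x" using ext_sup[OF F, of x] by blast
    then show "\<sigma> a = a" using \<sigma>(2) \<psi>(2) a by simp
  qed
  have "\<sigma> (to_ac f) = to_ac f" for f using fixF K by auto
  then have "bij \<sigma>" using surj_hom[OF \<sigma>(1)] by blast
  then have "field_aut \<sigma>" using field_aut_I[OF \<sigma>(1)] by blast
  moreover have "\<sigma> x \<noteq> x" using \<sigma>(2) ext_y[OF F] \<psi>(3) x'(2) by simp
  ultimately show ?thesis using fixF by blast
qed

context
  fixes j :: L
  assumes jsq: "j ^ 2 = hbar"
begin

lemma Kj_subfld: "subfld (Kj j)"
  unfolding subfld_def
  by (intro conjI ballI Kj_0[OF jsq] Kj_1[OF jsq] Kj_add[OF jsq] Kj_mult[OF jsq] Kj_uminus[OF jsq] Kj_inverse[OF jsq])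

lemma Kj_K: "range to_ac \<subseteq> Kj j" using Kj_to_ac[OF jsq] by blast

lemma fixed_Kj:
  assumes "\<forall>\<sigma>\<in>Gal_Kj j. \<sigma> x = x"
  shows "x \<in> Kj j"
proof (rule ccontr)
  assume "x \<notin> Kj j"
  from fixed_field[OF Kj_subfld Kj_K this] obtain \<sigma> where
    s: "field_aut \<sigma>" "\<forall>a\<in>Kj j. \<sigma> a = a" "\<sigma> x \<noteq> x" by blast
  have "\<sigma> \<in> Gal_Kj j" unfolding Gal_Kj_def using s(1,2) by simp
  then show False using assms s(3) by simp
qed

lemma conj_exists: "\<exists>\<sigma>. \<sigma> \<in> Gal_K_conj j"
proof -
  have h: "hom_on (Kj j) (conjKj j)" unfolding hom_on_def
    by (intro conjI ballI conj_add[OF jsq] conj_mult[OF jsq] conj_1[OF jsq])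
  obtain \<sigma> where \<sigma>: "hom_on UNIV \<sigma>" "\<forall>a\<in>Kj j. \<sigma> a = conjKj j a"
    using extension[OF Kj_subfld Kj_K h] by blast
  have fx: "\<sigma> (to_ac f) = to_ac f" for f using \<sigma>(2) Kj_to_ac[OF jsq] conj_to_ac[OF jsq] by simp
  then have "bij \<sigma>" using surj_hom[OF \<sigma>(1)] by blast
  then have "field_aut \<sigma>" using field_aut_I[OF \<sigma>(1)] by blast
  then have "\<sigma> \<in> Gal_K_conj j" unfolding Gal_K_conj_def using fx \<sigma>(2) by simp
  then show ?thesis by blast
qed

end

lemma mult_idx:
  fixes A B :: "'a::semiring_1 mat"
  assumes "A \<in> carrier_mat n n" "B \<in> carrier_mat n n" "i < n" "k < n"
  shows "(A * B) $$ (i,k) = (\<Sum>l<n. A $$ (i,l) * B $$ (l,k))"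
  using assms by (simp add: index_mult_mat scalar_prod_def atLeast0LessThan)

lemma invertible_ex:
  fixes M :: "'a::semiring_1 mat"
  assumes "M \<in> carrier_mat n n" "invertible_mat M"
  shows "\<exists>B\<in>carrier_mat n n. M * B = 1\<^sub>m n \<and> B * M = 1\<^sub>m n"
proof -
  obtain B where B: "inverts_mat M B" "inverts_mat B M"
    using assms(2) unfolding invertible_mat_def by blast
  have r: "dim_row M = n" "dim_col M = n" using assms(1) by auto
  have B1: "M * B = 1\<^sub>m n" using B(1) r unfolding inverts_mat_def by simp
  have B2: "B * M = 1\<^sub>m (dim_row B)" using B(2) unfolding inverts_mat_def by simp
  have c: "dim_col B = n" using arg_cong[OF B1, of dim_col] by (simp only: index_mult_mat(3) index_one_mat(3))
  have rr: "dim_row B = n" using arg_cong[OF B2, of dim_col] r by (simp only: index_mult_mat(3) index_one_mat(3))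
  have "B \<in> carrier_mat n n" by (rule carrier_matI[OF rr c])
  moreover have "B * M = 1\<^sub>m n" using B2 rr by simp
  ultimately show ?thesis using B1 by blast
qed

lemma minv_props:
  assumes "A \<in> carrier_mat n n" "\<exists>B\<in>carrier_mat n n. A * B = 1\<^sub>m n \<and> B * A = 1\<^sub>m n"
  shows "minv n A \<in> carrier_mat n n" "A * minv n A = 1\<^sub>m n" "minv n A * A = 1\<^sub>m n"
proof -
  have ex: "\<exists>B. B \<in> carrier_mat n n \<and> A * B = 1\<^sub>m n \<and> B * A = 1\<^sub>m n" using assms(2) by blast
  have "minv n A \<in> carrier_mat n n \<and> A * minv n A = 1\<^sub>m n \<and> minv n A * A = 1\<^sub>m n"
    unfolding minv_def by (rule someI_ex[OF ex])
  then show "minv n A \<in> carrier_mat n n" "A * minv n A = 1\<^sub>m n" "minv n A * A = 1\<^sub>m n" by auto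
qed

lemma inv_unique:
  fixes A B C :: "'a::semiring_1 mat"
  assumes "A \<in> carrier_mat n n" "B \<in> carrier_mat n n" "C \<in> carrier_mat n n"
    "B * A = 1\<^sub>m n" "A * C = 1\<^sub>m n"
  shows "B = C"
proof -
  have e1: "B * (A * C) = (B * A) * C" using assoc_mult_mat[OF assms(2,1,3)] by simp
  have "B = B * (A * C)" unfolding assms(5) using right_mult_one_mat[OF assms(2)] by simp
  also have "\<dots> = C" unfolding e1 assms(4) using left_mult_one_mat[OF assms(3)] by simp
  finally show ?thesis .
qed

lemma field_aut_hom: assumes "field_aut g" shows "semiring_hom g"
proof -
  have add: "g (x + y) = g x + g y" and mult: "g (x * y) = g x * g y" and one: "g 1 = 1" for x y
    using assms unfolding field_aut_def by auto
  have zero: "g 0 = 0" using add[of 0 0] by (metis add.right_neutral add_left_cancel add_0)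
  show ?thesis by unfold_locales (auto simp: add mult one zero)
qed

lemma field_aut_inj: "field_aut g \<Longrightarrow> g x = g y \<Longrightarrow> x = y"
  unfolding field_aut_def bij_def by (meson injD)

lemma field_aut_props:
  assumes "field_aut g"
  shows "g 0 = 0" "g (x / y) = g x / g y" "g (x * y) = g x * g y" "g (x + y) = g x + g y"
proof -
  show "g (x * y) = g x * g y" "g (x + y) = g x + g y" using assms unfolding field_aut_def by auto
  have h: "hom_on UNIV g" using assms unfolding field_aut_def hom_on_def by auto
  show "g 0 = 0" by (rule h0[OF subfld_UNIV h])
  show "g (x / y) = g x / g y"
    using hmult[OF subfld_UNIV h] hinverse[OF subfld_UNIV h] by (simp add: divide_inverse)
qed

definition dmat :: "nat \<Rightarrow> (nat \<Rightarrow> 'a::semiring_1) \<Rightarrow> 'a mat" where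
  "dmat n d = mat n n (\<lambda>(i,k). if i = k then d k else 0)"

lemma dmat_carrier: "dmat n d \<in> carrier_mat n n" by (simp add: dmat_def)
lemma dmat_idx: "i < n \<Longrightarrow> k < n \<Longrightarrow> dmat n d $$ (i,k) = (if i = k then d k else 0)"
  by (simp add: dmat_def)
lemma dmat_diag: "diagonal_mat (dmat n d)" unfolding diagonal_mat_def by (simp add: dmat_def)

lemma mult_dmat_right:
  fixes A :: "'a::semiring_1 mat"
  assumes "A \<in> carrier_mat n n" "i < n" "k < n"
  shows "(A * dmat n d) $$ (i,k) = A $$ (i,k) * d k"
proof -
  have "(A * dmat n d) $$ (i,k) = (\<Sum>l<n. A $$ (i,l) * (if l = k then d k else 0))"
    using assms by (subst mult_idx[OF assms(1) dmat_carrier]) (auto intro!: sum.cong simp: dmat_idx)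
  also have "\<dots> = A $$ (i,k) * d k" using assms(3)
    by (simp add: if_distrib[of "\<lambda>x. _ * x"] cong: if_cong)
  finally show ?thesis .
qed

lemma mult_dmat_left:
  fixes A :: "'a::semiring_1 mat"
  assumes "A \<in> carrier_mat n n" "i < n" "k < n"
  shows "(dmat n d * A) $$ (i,k) = d i * A $$ (i,k)"
proof -
  have "(dmat n d * A) $$ (i,k) = (\<Sum>l<n. (if i = l then d l else 0) * A $$ (l,k))"
    using assms by (subst mult_idx[OF dmat_carrier assms(1)]) (auto intro!: sum.cong simp: dmat_idx)
  also have "\<dots> = d i * A $$ (i,k)" using assms(2)
    by (simp add: if_distrib[of "\<lambda>x. x * _"] cong: if_cong)
  finally show ?thesis .
qed

lemma antidiag_carrier: "antidiag n \<in> carrier_mat n n" by (simp add: antidiag_def)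

lemma mult_antidiag_left:
  fixes A :: "'a::semiring_1 mat"
  assumes "A \<in> carrier_mat n n" "i < n" "k < n"
  shows "(antidiag n * A) $$ (i,k) = A $$ (n - 1 - i, k)"
proof -
  have "(antidiag n * A) $$ (i,k) = (\<Sum>l<n. (if i + l = n - 1 then 1 else 0) * A $$ (l,k))"
    using assms by (subst mult_idx[OF antidiag_carrier assms(1)]) (auto intro!: sum.cong simp: antidiag_def)
  also have "\<dots> = (\<Sum>l<n. if l = n - 1 - i then A $$ (l,k) else 0)"
    using assms(2) by (intro sum.cong) auto
  also have "\<dots> = A $$ (n - 1 - i, k)" using assms(2) by simp
  finally show ?thesis .
qed

lemma antidiag_sq: "antidiag n * antidiag n = (1\<^sub>m n :: 'a::semiring_1 mat)"
proof (rule eq_matI)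
  fix i k assume ik: "i < dim_row (1\<^sub>m n :: 'a mat)" "k < dim_col (1\<^sub>m n :: 'a mat)"
  then have "i < n" "k < n" by auto
  then show "(antidiag n * antidiag n) $$ (i,k) = (1\<^sub>m n :: 'a mat) $$ (i,k)"
    by (simp add: mult_antidiag_left antidiag_carrier) (auto simp: antidiag_def)
qed (auto simp: antidiag_def)

lemma sum_rearr:
  fixes t :: "nat \<Rightarrow> nat \<Rightarrow> nat \<Rightarrow> nat \<Rightarrow> 'a::comm_ring_1"
  shows "(\<Sum>b\<in>B. \<Sum>d\<in>D. (\<Sum>i\<in>I. \<Sum>k\<in>K. \<Sum>p\<in>P. \<Sum>q\<in>Q. t i k p q * ya i * z k b * yc p * z q d) * u b * v d)
    = (\<Sum>i\<in>I. \<Sum>k\<in>K. \<Sum>p\<in>P. \<Sum>q\<in>Q. t i k p q * ya i * yc p * (\<Sum>b\<in>B. z k b * u b) * (\<Sum>d\<in>D. z q d * v d))"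
proof -
  have l: "(\<Sum>b\<in>B. \<Sum>d\<in>D. (\<Sum>i\<in>I. \<Sum>k\<in>K. \<Sum>p\<in>P. \<Sum>q\<in>Q. t i k p q * ya i * z k b * yc p * z q d) * u b * v d)
     = (\<Sum>b\<in>B. \<Sum>d\<in>D. \<Sum>i\<in>I. \<Sum>k\<in>K. \<Sum>p\<in>P. \<Sum>q\<in>Q. t i k p q * ya i * z k b * yc p * z q d * u b * v d)"
    by (simp only: sum_distrib_right)
  also have "\<dots> = (\<Sum>i\<in>I. \<Sum>k\<in>K. \<Sum>p\<in>P. \<Sum>q\<in>Q. \<Sum>d\<in>D. \<Sum>b\<in>B. t i k p q * ya i * z k b * yc p * z q d * u b * v d)"
    apply (simp only: sum.swap[where A = D])
    apply (simp only: sum.swap[where A = B])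
    done
  also have "\<dots> = (\<Sum>i\<in>I. \<Sum>k\<in>K. \<Sum>p\<in>P. \<Sum>q\<in>Q. \<Sum>d\<in>D. \<Sum>b\<in>B. t i k p q * ya i * yc p * (z k b * u b) * (z q d * v d))"
    by (intro sum.cong refl) (simp add: mult_ac)
  also have "\<dots> = (\<Sum>i\<in>I. \<Sum>k\<in>K. \<Sum>p\<in>P. \<Sum>q\<in>Q. t i k p q * ya i * yc p * (\<Sum>b\<in>B. z k b * u b) * (\<Sum>d\<in>D. z q d * v d))"
    by (simp only: sum_distrib_left sum_distrib_right)
  finally show ?thesis .
qed


lemma sum_if_out: "(\<Sum>p\<in>P. if k = b then f p else 0) = (if k = b then sum f P else 0)"
  by simp

lemma ad_eq:
  fixes Y :: "'a::field mat" and T T' :: "'a tens"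
  assumes Y: "Y \<in> carrier_mat n n" and inv: "\<exists>B\<in>carrier_mat n n. Y * B = 1\<^sub>m n \<and> B * Y = 1\<^sub>m n"
    and ad: "Ad_tens n Y T = T'"
    and idx: "a < n" "c < n" "b' < n" "d' < n"
  shows "(\<Sum>i<n. \<Sum>p<n. T i b' p d' * Y $$ (a,i) * Y $$ (c,p)) =
         (\<Sum>b<n. \<Sum>d<n. T' a b c d * Y $$ (b,b') * Y $$ (d,d'))"
proof -
  define Z where "Z = minv n Y"
  have Z: "Z \<in> carrier_mat n n" "Z * Y = 1\<^sub>m n" using minv_props[OF Y inv] unfolding Z_def by auto
  have ZY: "(\<Sum>b<n. Z $$ (k,b) * Y $$ (b,b2)) = (if k = b2 then 1 else 0)" if "k < n" "b2 < n" for k b2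
    using mult_idx[OF Z(1) Y that] Z(2) that by simp
  have "(\<Sum>b<n. \<Sum>d<n. T' a b c d * Y $$ (b,b') * Y $$ (d,d')) =
        (\<Sum>b<n. \<Sum>d<n. (\<Sum>i<n. \<Sum>k<n. \<Sum>p<n. \<Sum>q<n. T i k p q * Y $$ (a,i) * Z $$ (k,b) * Y $$ (c,p) * Z $$ (q,d))
            * Y $$ (b,b') * Y $$ (d,d'))"
    unfolding ad[symmetric] Ad_tens_def Z_def using idx by (intro sum.cong refl) simp
  also have "\<dots> = (\<Sum>i<n. \<Sum>k<n. \<Sum>p<n. \<Sum>q<n. T i k p q * Y $$ (a,i) * Y $$ (c,p) *
        (\<Sum>b<n. Z $$ (k,b) * Y $$ (b,b')) * (\<Sum>d<n. Z $$ (q,d) * Y $$ (d,d')))"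
    by (rule sum_rearr)
  also have "\<dots> = (\<Sum>i<n. \<Sum>k<n. \<Sum>p<n. \<Sum>q<n. T i k p q * Y $$ (a,i) * Y $$ (c,p) *
        (if k = b' then 1 else 0) * (if q = d' then 1 else 0))"
    using idx by (intro sum.cong refl) (simp only: ZY lessThan_iff)
  also have "\<dots> = (\<Sum>i<n. \<Sum>p<n. T i b' p d' * Y $$ (a,i) * Y $$ (c,p))"
    using idx by (simp add: if_distrib[of "\<lambda>x. _ * x"] sum_if_out cong: if_cong)
  finally show ?thesis by simp
qed

lemma rdj_sum1:
  fixes W :: "nat \<Rightarrow> nat \<Rightarrow> 'a::field_char_0"
  assumes "a < n" "c < n"
  shows "(\<Sum>b<n. \<Sum>d<n. r_DJ n a b c d * W b d) =
    (if a < c then W c a else 0) + (if a = c then W a a / 2 else 0) - W a c / (2 * of_nat n)"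
proof -
  have "(\<Sum>b<n. \<Sum>d<n. r_DJ n a b c d * W b d) =
    (\<Sum>b<n. \<Sum>d<n. (if b = c then (if d = a then (if a < c then W c a else 0) else 0) else 0)
       + (if b = a then (if d = a then (if c = a then W a a / 2 else 0) else 0) else 0)
       - (if b = a then (if d = c then W a c / (2 * of_nat n) else 0) else 0))"
    using assms by (intro sum.cong refl) (auto simp: r_DJ_def field_simps)
  also have "\<dots> = (if a < c then W c a else 0) + (if a = c then W a a / 2 else 0) - W a c / (2 * of_nat n)"
    using assms by (simp add: sum.distrib sum_subtractf sum_if_out)
  finally show ?thesis .
qed


lemma rdj_sum2:
  fixes W :: "nat \<Rightarrow> nat \<Rightarrow> 'a::field_char_0"
  assumes "a < n" "c < n"
  shows "(\<Sum>b<n. \<Sum>d<n. flip_tens (r_DJ n) a b c d * W b d) =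
    (if c < a then W c a else 0) + (if a = c then W a a / 2 else 0) - W a c / (2 * of_nat n)"
proof -
  have "(\<Sum>b<n. \<Sum>d<n. flip_tens (r_DJ n) a b c d * W b d) =
    (\<Sum>b<n. \<Sum>d<n. (if b = c then (if d = a then (if c < a then W c a else 0) else 0) else 0)
       + (if b = a then (if d = a then (if c = a then W a a / 2 else 0) else 0) else 0)
       - (if b = a then (if d = c then W a c / (2 * of_nat n) else 0) else 0))"
    using assms by (intro sum.cong refl) (auto simp: r_DJ_def flip_tens_def field_simps)
  also have "\<dots> = (if c < a then W c a else 0) + (if a = c then W a a / 2 else 0) - W a c / (2 * of_nat n)"
    using assms by (simp add: sum.distrib sum_subtractf sum_if_out)
  finally show ?thesis .
qed

lemma rdj_sum3:
  fixes W :: "nat \<Rightarrow> nat \<Rightarrow> 'a::field_char_0"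
  assumes "b < n" "d < n"
  shows "(\<Sum>i<n. \<Sum>p<n. r_DJ n i b p d * W i p) =
    (if d < b then W d b else 0) + (if b = d then W b b / 2 else 0) - W b d / (2 * of_nat n)"
proof -
  have "(\<Sum>i<n. \<Sum>p<n. r_DJ n i b p d * W i p) =
    (\<Sum>i<n. \<Sum>p<n. (if i = d then (if p = b then (if d < b then W d b else 0) else 0) else 0)
       + (if i = b then (if p = b then (if d = b then W b b / 2 else 0) else 0) else 0)
       - (if i = b then (if p = d then W b d / (2 * of_nat n) else 0) else 0))"
    using assms by (intro sum.cong refl) (auto simp: r_DJ_def field_simps)
  also have "\<dots> = (if d < b then W d b else 0) + (if b = d then W b b / 2 else 0) - W b d / (2 * of_nat n)"
    using assms by (simp add: sum.distrib sum_subtractf sum_if_out)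
  finally show ?thesis .
qed

lemma mono_id:
  fixes \<rho> :: "nat \<Rightarrow> nat" and n :: nat
  assumes r: "\<And>m. m < n \<Longrightarrow> \<rho> m < n" and mono: "\<And>m1 m2. m1 < m2 \<Longrightarrow> m2 < n \<Longrightarrow> \<rho> m1 < \<rho> m2"
  shows "m < n \<Longrightarrow> \<rho> m = m"
proof -
  have up: "\<rho> m + k \<le> \<rho> (m + k)" if "m + k < n" for m k
    using that
  proof (induction k)
    case 0 then show ?case by simp
  next
    case (Suc k)
    then have "\<rho> m + k \<le> \<rho> (m + k)" by simp
    moreover have "\<rho> (m + k) < \<rho> (m + Suc k)" using mono[of "m + k" "m + Suc k"] Suc(2) by simp
    ultimately show ?case by simp
  qed
  assume m: "m < n"
  have "\<rho> 0 + m \<le> \<rho> m" using up[of 0 m] m by simp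
  moreover have "\<rho> m + (n - 1 - m) \<le> \<rho> (n - 1)" using up[of m "n - 1 - m"] m by simp
  moreover have "\<rho> (n - 1) < n" using r[of "n - 1"] m by simp
  ultimately show "\<rho> m = m" by linarith
qed

lemma shape_generic:
  fixes Y :: "'a::field_char_0 mat" and T' :: "'a tens"
  assumes Y: "Y \<in> carrier_mat n n" and inv: "\<exists>B\<in>carrier_mat n n. Y * B = 1\<^sub>m n \<and> B * Y = 1\<^sub>m n"
   and ad: "Ad_tens n Y (r_DJ n) = T'"
   and sumT: "\<And>a c W. a < n \<Longrightarrow> c < n \<Longrightarrow> (\<Sum>b<n. \<Sum>d<n. T' a b c d * W b d) =
      (if lt a c then W c a else 0) + (if a = c then W a a / 2 else 0) - W a c / (2 * of_nat n)"
   and irr: "\<And>a. \<not> lt a a"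
  shows "\<exists>\<rho>. (\<forall>m<n. \<rho> m < n) \<and> (\<forall>m<n. \<forall>a<n. a \<noteq> \<rho> m \<longrightarrow> Y $$ (a,m) = 0) \<and>
      (\<forall>m<n. Y $$ (\<rho> m, m) \<noteq> 0) \<and> (\<forall>m1 m2. m1 < m2 \<longrightarrow> m2 < n \<longrightarrow> lt (\<rho> m1) (\<rho> m2))"
proof -
  have E: "(if d' < b' then Y $$ (a,d') * Y $$ (c,b') else 0) + (if b' = d' then Y $$ (a,b') * Y $$ (c,b') / 2 else 0)
       - Y $$ (a,b') * Y $$ (c,d') / (2 * of_nat n) =
     (if lt a c then Y $$ (c,b') * Y $$ (a,d') else 0) + (if a = c then Y $$ (a,b') * Y $$ (a,d') / 2 else 0)
       - Y $$ (a,b') * Y $$ (c,d') / (2 * of_nat n)"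
    if idx: "a < n" "c < n" "b' < n" "d' < n" for a c b' d'
  proof -
    have "(\<Sum>i<n. \<Sum>p<n. r_DJ n i b' p d' * Y $$ (a,i) * Y $$ (c,p)) =
         (\<Sum>b<n. \<Sum>d<n. T' a b c d * Y $$ (b,b') * Y $$ (d,d'))"
      by (rule ad_eq[OF Y inv ad idx])
    moreover have "(\<Sum>i<n. \<Sum>p<n. r_DJ n i b' p d' * Y $$ (a,i) * Y $$ (c,p)) =
         (\<Sum>i<n. \<Sum>p<n. r_DJ n i b' p d' * (Y $$ (a,i) * Y $$ (c,p)))" by (simp add: mult.assoc)
    moreover have "(\<Sum>b<n. \<Sum>d<n. T' a b c d * Y $$ (b,b') * Y $$ (d,d')) =
         (\<Sum>b<n. \<Sum>d<n. T' a b c d * (Y $$ (b,b') * Y $$ (d,d')))" by (simp add: mult.assoc)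
    ultimately show ?thesis
      using rdj_sum3[OF idx(3,4), of "\<lambda>i p. Y $$ (a,i) * Y $$ (c,p)"]
        sumT[OF idx(1,2), of "\<lambda>b d. Y $$ (b,b') * Y $$ (d,d')"] by simp
  qed
  have col0: "Y $$ (a,m) * Y $$ (c,m) = 0" if "a < n" "c < n" "m < n" "a \<noteq> c" for a c m
  proof -
    have "Y $$ (a,m) * Y $$ (c,m) / 2 = (if lt a c then Y $$ (c,m) * Y $$ (a,m) else 0)"
      using E[OF that(1,2,3,3)] that(4) by simp
    then show ?thesis by (cases "lt a c") (auto simp: mult.commute)
  qed
  obtain B where B: "B \<in> carrier_mat n n" "B * Y = 1\<^sub>m n" using inv by blast
  have nz: "\<exists>l<n. Y $$ (l,m) \<noteq> 0" if m: "m < n" for m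
  proof (rule ccontr)
    assume "\<not> ?thesis"
    then have "\<And>l. l < n \<Longrightarrow> Y $$ (l,m) = 0" by blast
    then have "(B * Y) $$ (m,m) = 0" using mult_idx[OF B(1) Y m m] by simp
    then show False using B(2) m by simp
  qed
  define \<rho> where "\<rho> m = (SOME l. l < n \<and> Y $$ (l,m) \<noteq> 0)" for m
  have \<rho>: "\<rho> m < n \<and> Y $$ (\<rho> m, m) \<noteq> 0" if "m < n" for m
    unfolding \<rho>_def using someI_ex[OF nz[OF that]] by blast
  have uniq: "Y $$ (a,m) = 0" if "m < n" "a < n" "a \<noteq> \<rho> m" for m a
    using col0[OF that(2) _ that(1) that(3), of] \<rho>[OF that(1)] by simp
  have ord: "lt (\<rho> m1) (\<rho> m2)" if "m1 < m2" "m2 < n" for m1 m2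
  proof -
    have m1: "m1 < n" using that by simp
    define a where "a = \<rho> m1"
    define c where "c = \<rho> m2"
    have ac: "a < n" "c < n" "Y $$ (a,m1) \<noteq> 0" "Y $$ (c,m2) \<noteq> 0"
      using \<rho>[OF m1] \<rho>[OF that(2)] unfolding a_def c_def by auto
    have e: "Y $$ (a,m1) * Y $$ (c,m2) = (if lt a c then Y $$ (c,m2) * Y $$ (a,m1) else 0)
        + (if a = c then Y $$ (a,m2) * Y $$ (a,m1) / 2 else 0)"
      using E[OF ac(1,2) that(2) m1] that(1) by simp
    show ?thesis
    proof (cases "a = c")
      case True
      then have "Y $$ (a,m1) * Y $$ (a,m2) = Y $$ (a,m2) * Y $$ (a,m1) / 2" using e irr by simp
      then have "Y $$ (a,m1) * Y $$ (a,m2) = 0" by (simp add: mult.commute)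
      then show ?thesis using ac True by simp
    next
      case False
      then have "Y $$ (a,m1) * Y $$ (c,m2) = (if lt a c then Y $$ (c,m2) * Y $$ (a,m1) else 0)"
        using e by simp
      then show ?thesis using ac unfolding a_def c_def by (cases "lt (\<rho> m1) (\<rho> m2)") auto
    qed
  qed
  show ?thesis using \<rho> uniq ord by (intro exI[of _ \<rho>]) auto
qed

lemma diag_shape:
  fixes Y :: "'a::field_char_0 mat"
  assumes Y: "Y \<in> carrier_mat n n" and inv: "\<exists>B\<in>carrier_mat n n. Y * B = 1\<^sub>m n \<and> B * Y = 1\<^sub>m n"
   and ad: "Ad_tens n Y (r_DJ n) = r_DJ n"
  shows "\<forall>i<n. \<forall>k<n. i \<noteq> k \<longrightarrow> Y $$ (i,k) = 0"
proof -
  obtain \<rho> where \<rho>: "\<forall>m<n. \<rho> m < n" "\<forall>m<n. \<forall>a<n. a \<noteq> \<rho> m \<longrightarrow> Y $$ (a,m) = 0"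
     "\<forall>m1 m2. m1 < m2 \<longrightarrow> m2 < n \<longrightarrow> \<rho> m1 < \<rho> m2"
    using shape_generic[where lt = "(<)", OF Y inv ad rdj_sum1] by auto
  have "\<rho> m = m" if "m < n" for m using mono_id[of n \<rho>] \<rho>(1,3) that by blast
  then show ?thesis using \<rho>(2) by auto
qed

lemma anti_shape:
  fixes Y :: "'a::field_char_0 mat"
  assumes Y: "Y \<in> carrier_mat n n" and inv: "\<exists>B\<in>carrier_mat n n. Y * B = 1\<^sub>m n \<and> B * Y = 1\<^sub>m n"
   and ad: "Ad_tens n Y (r_DJ n) = flip_tens (r_DJ n)"
  shows "\<forall>i<n. \<forall>k<n. i + k \<noteq> n - 1 \<longrightarrow> Y $$ (i,k) = 0"
proof -
  obtain \<rho> where \<rho>: "\<forall>m<n. \<rho> m < n" "\<forall>m<n. \<forall>a<n. a \<noteq> \<rho> m \<longrightarrow> Y $$ (a,m) = 0"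
     "\<forall>m1 m2. m1 < m2 \<longrightarrow> m2 < n \<longrightarrow> \<rho> m2 < \<rho> m1"
    using shape_generic[where lt = "\<lambda>a c. c < a", OF Y inv ad rdj_sum2] by auto
  define \<tau> where "\<tau> m = n - 1 - \<rho> m" for m
  have t1: "\<tau> m < n" if "m < n" for m unfolding \<tau>_def using that by arith
  have t2: "\<tau> m1 < \<tau> m2" if "m1 < m2" "m2 < n" for m1 m2
  proof -
    have "\<rho> m2 < \<rho> m1" "\<rho> m1 < n" using \<rho>(1,3) that by auto
    then show ?thesis unfolding \<tau>_def by arith
  qed
  have "\<rho> m = n - 1 - m" if "m < n" for m
  proof -
    have "\<tau> m = m" using mono_id[of n \<tau>, OF t1 t2 that] by blast
    moreover have "\<rho> m < n" using \<rho>(1) that by blast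
    ultimately show ?thesis unfolding \<tau>_def by arith
  qed
  then show ?thesis using \<rho>(2) by auto
qed

lemma map_aut_mult:
  assumes "field_aut g" "A \<in> carrier_mat n n" "B \<in> carrier_mat n n"
  shows "map_mat g (A * B) = map_mat g A * map_mat g B"
  using semiring_hom.mat_hom_mult[OF field_aut_hom[OF assms(1)] assms(2,3)] .

lemma map_aut_one: "field_aut g \<Longrightarrow> map_mat g (1\<^sub>m n) = 1\<^sub>m n"
  using semiring_hom.mat_hom_one[OF field_aut_hom] by blast

definition entries_in :: "nat \<Rightarrow> L set \<Rightarrow> L mat \<Rightarrow> bool" where
  "entries_in n F A \<longleftrightarrow> (\<forall>i<n. \<forall>k<n. A $$ (i,k) \<in> F)"

lemma entries_mult:
  assumes F: "subfld F" and A: "A \<in> carrier_mat n n" and B: "B \<in> carrier_mat n n"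
    and eA: "entries_in n F A" and eB: "entries_in n F B"
  shows "entries_in n F (A * B)"
  unfolding entries_in_def
proof (intro allI impI)
  fix i k assume ik: "i < n" "k < n"
  show "(A * B) $$ (i,k) \<in> F" unfolding mult_idx[OF A B ik]
    using eA eB ik unfolding entries_in_def by (intro sfsum[OF F] sfmult[OF F]) auto
qed

lemma mult_diagY:
  fixes A Y :: "'a::semiring_1 mat"
  assumes A: "A \<in> carrier_mat n n" and Y: "Y \<in> carrier_mat n n"
    and d: "\<forall>i<n. \<forall>k<n. i \<noteq> k \<longrightarrow> Y $$ (i,k) = 0" and ik: "i < n" "k < n"
  shows "(A * Y) $$ (i,k) = A $$ (i,k) * Y $$ (k,k)"
proof -
  have "(A * Y) $$ (i,k) = (\<Sum>l<n. if l = k then A $$ (i,l) * Y $$ (l,k) else 0)"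
    unfolding mult_idx[OF A Y ik] using d ik by (intro sum.cong refl) auto
  also have "\<dots> = A $$ (i,k) * Y $$ (k,k)" using ik by simp
  finally show ?thesis .
qed

lemma Ymat:
  assumes M: "M \<in> carrier_mat n n" and invM: "\<exists>B\<in>carrier_mat n n. M * B = 1\<^sub>m n \<and> B * M = 1\<^sub>m n"
    and g: "field_aut g"
  shows "minv n M * map_mat g M \<in> carrier_mat n n"
    "\<exists>B\<in>carrier_mat n n. (minv n M * map_mat g M) * B = 1\<^sub>m n \<and> B * (minv n M * map_mat g M) = 1\<^sub>m n"
    "M * (minv n M * map_mat g M) = map_mat g M"
proof -
  define N where "N = minv n M"
  have N: "N \<in> carrier_mat n n" "M * N = 1\<^sub>m n" "N * M = 1\<^sub>m n" using minv_props[OF M invM] unfolding N_def by auto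
  have gM: "map_mat g M \<in> carrier_mat n n" and gN: "map_mat g N \<in> carrier_mat n n" using M N(1) by auto
  have gMN: "map_mat g M * map_mat g N = 1\<^sub>m n"
    using map_aut_mult[OF g M N(1)] N(2) map_aut_one[OF g] by simp
  have gNM: "map_mat g N * map_mat g M = 1\<^sub>m n"
    using map_aut_mult[OF g N(1) M] N(3) map_aut_one[OF g] by simp
  show "minv n M * map_mat g M \<in> carrier_mat n n" using N(1) gM unfolding N_def by simp
  have "(N * map_mat g M) * (map_mat g N * M) = N * (map_mat g M * map_mat g N) * M"
    using N(1) gM gN M by (simp add: assoc_mult_mat[of _ n n _ n _ n])
  also have "\<dots> = 1\<^sub>m n" using gMN N(3) N(1) by simp
  finally have e1: "(N * map_mat g M) * (map_mat g N * M) = 1\<^sub>m n" .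
  have "(map_mat g N * M) * (N * map_mat g M) = map_mat g N * (M * N) * map_mat g M"
    using N(1) gM gN M by (simp add: assoc_mult_mat[of _ n n _ n _ n])
  also have "\<dots> = 1\<^sub>m n" using gNM N(2) gN by simp
  finally have e2: "(map_mat g N * M) * (N * map_mat g M) = 1\<^sub>m n" .
  show "\<exists>B\<in>carrier_mat n n. (minv n M * map_mat g M) * B = 1\<^sub>m n \<and> B * (minv n M * map_mat g M) = 1\<^sub>m n"
    unfolding N_def[symmetric] using e1 e2 gN M by (intro bexI[of _ "map_mat g N * M"]) auto
  have "M * (N * map_mat g M) = (M * N) * map_mat g M" using M N(1) gM by (simp add: assoc_mult_mat[of _ n n _ n _ n])
  then show "M * (minv n M * map_mat g M) = map_mat g M" using N(2) gM unfolding N_def[symmetric] by simp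
qed


lemma map_dmat: "field_aut g \<Longrightarrow> map_mat g (dmat n f) = dmat n (\<lambda>k. g (f k))"
  by (rule eq_matI) (auto simp: dmat_def field_aut_props(1))

lemma dmat_mult:
  fixes f h :: "nat \<Rightarrow> 'a::semiring_1"
  shows "dmat n f * dmat n h = dmat n (\<lambda>k. f k * h k)"
proof (rule eq_matI)
  fix i k assume "i < dim_row (dmat n (\<lambda>k. f k * h k))" "k < dim_col (dmat n (\<lambda>k. f k * h k))"
  then have ik: "i < n" "k < n" by (auto simp: dmat_def)
  show "(dmat n f * dmat n h) $$ (i, k) = dmat n (\<lambda>k. f k * h k) $$ (i, k)"
    unfolding mult_dmat_right[OF dmat_carrier ik] using ik by (simp add: dmat_idx)
qed (auto simp: dmat_def)

lemma dmat_one: "dmat n (\<lambda>k. 1) = (1\<^sub>m n :: 'a::semiring_1 mat)"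
  by (rule eq_matI) (auto simp: dmat_def)

theorem mainTheorem17:
  fixes j :: L and n :: nat and M :: "L mat"
  assumes "j ^ 2 = hbar"
    and "BD_twisted_cocycle j n M"
  shows "\<exists>P D D1. GL_over n (Kj j) P \<and> GL_over n UNIV D \<and> diagonal_mat D \<and> M = P * D \<and>
           GL_over n (Kj j) D1 \<and> diagonal_mat D1 \<and>
           map_mat (conjKj j) P = P * antidiag n * D1"
proof -
  note jsq = assms(1)
  have M: "M \<in> carrier_mat n n" and Minv: "invertible_mat M"
    and galKj: "\<And>g. g \<in> Gal_Kj j \<Longrightarrow> Ad_tens n (minv n M * map_mat g M) (r_DJ n) = r_DJ n"
    and galC: "\<And>g. g \<in> Gal_K_conj j \<Longrightarrow> Ad_tens n (minv n M * map_mat g M) (r_DJ n) = flip_tens (r_DJ n)"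
    using assms(2) unfolding BD_twisted_cocycle_def by auto
  have invM: "\<exists>B\<in>carrier_mat n n. M * B = 1\<^sub>m n \<and> B * M = 1\<^sub>m n" by (rule invertible_ex[OF M Minv])
  define N where "N = minv n M"
  have N: "N \<in> carrier_mat n n" "M * N = 1\<^sub>m n" "N * M = 1\<^sub>m n" using minv_props[OF M invM] unfolding N_def by auto
  have KjF: "subfld (Kj j)" by (rule Kj_subfld[OF jsq])
  have nz: "\<exists>l<n. M $$ (l,k) \<noteq> 0" if k: "k < n" for k
  proof (rule ccontr)
    assume "\<not> ?thesis"
    then have "\<And>l. l < n \<Longrightarrow> M $$ (l,k) = 0" by blast
    then have "(N * M) $$ (k,k) = 0" using mult_idx[OF N(1) M k k] by simp
    then show False using N(3) k by simp
  qed
  define rr where "rr k = (SOME l. l < n \<and> M $$ (l,k) \<noteq> 0)" for k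
  have rr: "rr k < n \<and> M $$ (rr k, k) \<noteq> 0" if "k < n" for k
    unfolding rr_def using someI_ex[OF nz[OF that]] by blast
  define d where "d k = M $$ (rr k, k)" for k
  have d0: "d k \<noteq> 0" if "k < n" for k using rr[OF that] unfolding d_def by simp
  define D where "D = dmat n d"
  define Dinv where "Dinv = dmat n (\<lambda>k. inverse (d k))"
  have D: "D \<in> carrier_mat n n" "Dinv \<in> carrier_mat n n" unfolding D_def Dinv_def by (auto simp: dmat_carrier)
  have DDinv: "D * Dinv = 1\<^sub>m n" "Dinv * D = 1\<^sub>m n"
  proof -
    have "dmat n (\<lambda>k. d k * inverse (d k)) = dmat n (\<lambda>k. 1)" "dmat n (\<lambda>k. inverse (d k) * d k) = dmat n (\<lambda>k. 1)"
      by (auto intro!: eq_matI simp: dmat_def d0)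
    then show "D * Dinv = 1\<^sub>m n" "Dinv * D = 1\<^sub>m n" unfolding D_def Dinv_def dmat_mult dmat_one by auto
  qed
  define P where "P = M * Dinv"
  have P: "P \<in> carrier_mat n n" unfolding P_def using M D by simp
  have Pidx: "P $$ (i,k) = M $$ (i,k) / d k" if "i < n" "k < n" for i k
    unfolding P_def Dinv_def using mult_dmat_right[OF M that] by (simp add: divide_inverse)
  have MPD: "M = P * D"
  proof -
    have "P * D = M * (Dinv * D)" unfolding P_def using M D by (simp add: assoc_mult_mat[of _ n n _ n _ n])
    then show ?thesis using DDinv M by simp
  qed
  define Q where "Q = D * N"
  have Q: "Q \<in> carrier_mat n n" unfolding Q_def using D N by simp
  have PQ: "P * Q = 1\<^sub>m n"
  proof -
    have "P * Q = M * (Dinv * D) * N" unfolding P_def Q_def using M D N(1)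
      by (simp add: assoc_mult_mat[of _ n n _ n _ n])
    then show ?thesis using DDinv N M by simp
  qed
  have QP: "Q * P = 1\<^sub>m n"
  proof -
    have "Q * P = D * (N * M) * Dinv" unfolding P_def Q_def using M D N(1)
      by (simp add: assoc_mult_mat[of _ n n _ n _ n])
    then show ?thesis using DDinv N D by simp
  qed
  have Pfix: "g (P $$ (i,k)) = P $$ (i,k)" if g: "g \<in> Gal_Kj j" and ik: "i < n" "k < n" for g i k
  proof -
    have ga: "field_aut g" using g unfolding Gal_Kj_def by blast
    define Y where "Y = minv n M * map_mat g M"
    have Y: "Y \<in> carrier_mat n n" "\<exists>B\<in>carrier_mat n n. Y * B = 1\<^sub>m n \<and> B * Y = 1\<^sub>m n" "M * Y = map_mat g M"
      using Ymat[OF M invM ga] unfolding Y_def by auto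
    have dg: "\<forall>i<n. \<forall>k<n. i \<noteq> k \<longrightarrow> Y $$ (i,k) = 0"
      by (rule diag_shape[OF Y(1,2)]) (use galKj[OF g] in \<open>simp add: Y_def\<close>)
    have gM: "g (M $$ (a,k)) = M $$ (a,k) * Y $$ (k,k)" if "a < n" for a
    proof -
      have "g (M $$ (a,k)) = map_mat g M $$ (a,k)" using M that ik by simp
      also have "\<dots> = M $$ (a,k) * Y $$ (k,k)" unfolding Y(3)[symmetric] by (rule mult_diagY[OF M Y(1) dg that ik(2)])
      finally show ?thesis .
    qed
    have "g (d k) \<noteq> 0" using d0[OF ik(2)] field_aut_inj[OF ga, of "d k" 0] field_aut_props(1)[OF ga] by auto
    then have Ykk: "Y $$ (k,k) \<noteq> 0" using gM[of "rr k"] rr[OF ik(2)] unfolding d_def by auto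
    have "g (P $$ (i,k)) = g (M $$ (i,k)) / g (d k)" unfolding Pidx[OF ik] by (rule field_aut_props(2)[OF ga])
    also have "\<dots> = (M $$ (i,k) * Y $$ (k,k)) / (d k * Y $$ (k,k))"
      using gM[OF ik(1)] gM[of "rr k"] rr[OF ik(2)] unfolding d_def by simp
    also have "\<dots> = P $$ (i,k)" using Ykk unfolding Pidx[OF ik] by simp
    finally show ?thesis .
  qed
  have PKj: "entries_in n (Kj j) P"
    unfolding entries_in_def using Pfix by (auto intro!: fixed_Kj[OF jsq])
  have mapP: "map_mat g P = P" if g: "g \<in> Gal_Kj j" for g
    by (rule eq_matI) (use P Pfix[OF g] in auto)
  have Qfix: "g (Q $$ (i,k)) = Q $$ (i,k)" if g: "g \<in> Gal_Kj j" and ik: "i < n" "k < n" for g i k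
  proof -
    have ga: "field_aut g" using g unfolding Gal_Kj_def by blast
    have "P * map_mat g Q = 1\<^sub>m n"
      using map_aut_mult[OF ga P Q] mapP[OF g] PQ map_aut_one[OF ga] by simp
    then have "Q = map_mat g Q" using inv_unique[OF P Q _ QP] Q by simp
    then show ?thesis using ik Q by (metis carrier_matD(1) carrier_matD(2) index_map_mat(1))
  qed
  have QKj: "entries_in n (Kj j) Q"
    unfolding entries_in_def using Qfix by (auto intro!: fixed_Kj[OF jsq])
  have GLP: "GL_over n (Kj j) P"
    unfolding GL_over_def using P Q PKj QKj PQ QP unfolding entries_in_def by blast
  have GLD: "GL_over n UNIV D"
    unfolding GL_over_def using D DDinv by blast
  have diagD: "diagonal_mat D" unfolding D_def by (rule dmat_diag)
  obtain \<sigma>2 where s2: "\<sigma>2 \<in> Gal_K_conj j" using conj_exists[OF jsq] by blast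
  have ga2: "field_aut \<sigma>2" and s2K: "\<And>x. x \<in> Kj j \<Longrightarrow> \<sigma>2 x = conjKj j x"
    using s2 unfolding Gal_K_conj_def by auto
  define Y2 where "Y2 = minv n M * map_mat \<sigma>2 M"
  have Y2: "Y2 \<in> carrier_mat n n" "\<exists>B\<in>carrier_mat n n. Y2 * B = 1\<^sub>m n \<and> B * Y2 = 1\<^sub>m n" "M * Y2 = map_mat \<sigma>2 M"
    using Ymat[OF M invM ga2] unfolding Y2_def by auto
  have ad2: "\<forall>i<n. \<forall>k<n. i + k \<noteq> n - 1 \<longrightarrow> Y2 $$ (i,k) = 0"
    by (rule anti_shape[OF Y2(1,2)]) (use galC[OF s2] in \<open>simp add: Y2_def\<close>)
  define sP where "sP = map_mat \<sigma>2 P"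
  define sQ where "sQ = map_mat \<sigma>2 Q"
  define sDinv where "sDinv = map_mat \<sigma>2 Dinv"
  define S where "S = (antidiag n :: L mat)"
  have car: "sP \<in> carrier_mat n n" "sQ \<in> carrier_mat n n" "sDinv \<in> carrier_mat n n" "S \<in> carrier_mat n n"
    unfolding sP_def sQ_def sDinv_def S_def using P Q D by (auto simp: antidiag_carrier)
  have conjP: "map_mat (conjKj j) P = sP"
    unfolding sP_def by (rule eq_matI) (use P PKj s2K in \<open>auto simp: entries_in_def\<close>)
  have sPQ: "sP * sQ = 1\<^sub>m n" unfolding sP_def sQ_def
    using map_aut_mult[OF ga2 P Q] PQ map_aut_one[OF ga2] by simp
  have sQP: "sQ * sP = 1\<^sub>m n" unfolding sP_def sQ_def
    using map_aut_mult[OF ga2 Q P] QP map_aut_one[OF ga2] by simp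
  have SS: "S * S = 1\<^sub>m n" unfolding S_def by (rule antidiag_sq)
  define W where "W = D * (Y2 * sDinv)"
  have Wc: "W \<in> carrier_mat n n" unfolding W_def using D Y2(1) car by simp
  have sPW: "sP = P * W"
  proof -
    have "sP = map_mat \<sigma>2 M * sDinv" unfolding sP_def sDinv_def P_def by (rule map_aut_mult[OF ga2 M D(2)])
    also have "\<dots> = (M * Y2) * sDinv" using Y2(3) by simp
    also have "\<dots> = M * (Y2 * sDinv)" using M Y2(1) car by (simp add: assoc_mult_mat[of _ n n _ n _ n])
    also have "\<dots> = (P * D) * (Y2 * sDinv)" using MPD by simp
    also have "\<dots> = P * W" unfolding W_def using P D Y2(1) car by (simp add: assoc_mult_mat[of _ n n _ n _ n])
    finally show ?thesis .
  qed
  have QsP: "Q * sP = W"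
  proof -
    have "Q * sP = (Q * P) * W" unfolding sPW using Q P Wc by (simp add: assoc_mult_mat[of _ n n _ n _ n])
    then show ?thesis using QP Wc by simp
  qed
  define D1 where "D1 = S * W"
  have D1c: "D1 \<in> carrier_mat n n" unfolding D1_def using car Wc by simp
  have sDinv_eq: "sDinv = dmat n (\<lambda>k. \<sigma>2 (inverse (d k)))" unfolding sDinv_def Dinv_def by (rule map_dmat[OF ga2])
  have D1idx: "D1 $$ (i,k) = d (n - 1 - i) * (Y2 $$ (n - 1 - i, k) * \<sigma>2 (inverse (d k)))"
    if ik: "i < n" "k < n" for i k
  proof -
    have i': "n - 1 - i < n" using ik by arith
    have "D1 $$ (i,k) = W $$ (n - 1 - i, k)" unfolding D1_def S_def by (rule mult_antidiag_left[OF Wc ik])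
    also have "\<dots> = d (n - 1 - i) * (Y2 * sDinv) $$ (n - 1 - i, k)" unfolding W_def D_def
      by (rule mult_dmat_left) (use Y2(1) car i' ik in auto)
    also have "(Y2 * sDinv) $$ (n - 1 - i, k) = Y2 $$ (n - 1 - i, k) * \<sigma>2 (inverse (d k))"
      unfolding sDinv_eq by (rule mult_dmat_right[OF Y2(1) i' ik(2)])
    finally show ?thesis .
  qed
  have diagD1: "diagonal_mat D1"
    unfolding diagonal_mat_def
  proof (intro allI impI)
    fix i k assume "i < dim_row D1" "k < dim_col D1" "i \<noteq> k"
    then have ik: "i < n" "k < n" "i \<noteq> k" using D1c by auto
    have ne: "(n - 1 - i) + k \<noteq> n - 1" using ik by arith
    have i': "n - 1 - i < n" using ik by arith
    have "Y2 $$ (n - 1 - i, k) = 0" by (rule ad2[rule_format, OF i' ik(2) ne])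
    then show "D1 $$ (i,k) = 0" unfolding D1idx[OF ik(1,2)] by simp
  qed
  have final: "P * S * D1 = sP"
  proof -
    have "P * S * D1 = P * ((S * S) * W)" unfolding D1_def using P car Wc
      by (simp add: assoc_mult_mat[of _ n n _ n _ n])
    also have "\<dots> = P * W" using SS Wc by simp
    finally show ?thesis using sPW by simp
  qed
  have SKj: "entries_in n (Kj j) S" unfolding entries_in_def S_def antidiag_def
    using Kj_0[OF jsq] Kj_1[OF jsq] by auto
  have sPKj: "entries_in n (Kj j) sP" unfolding entries_in_def sP_def
    using PKj P s2K conj_in_Kj[OF jsq] unfolding entries_in_def by auto
  have sQKj: "entries_in n (Kj j) sQ" unfolding entries_in_def sQ_def
    using QKj Q s2K conj_in_Kj[OF jsq] unfolding entries_in_def by auto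
  have D1eq: "D1 = S * (Q * sP)" unfolding D1_def QsP ..
  have D1Kj: "entries_in n (Kj j) D1" unfolding D1eq
    by (intro entries_mult[OF KjF] car Q SKj QKj sPKj) (use Q car in simp)
  define D1inv where "D1inv = sQ * (P * S)"
  have D1ic: "D1inv \<in> carrier_mat n n" unfolding D1inv_def using car P by simp
  have D1iKj: "entries_in n (Kj j) D1inv" unfolding D1inv_def
    by (intro entries_mult[OF KjF] car P SKj PKj sQKj) (use P car in simp)
  have "D1 * D1inv = S * (Q * ((sP * sQ) * (P * S)))" unfolding D1eq D1inv_def using car P Q
    by (simp add: assoc_mult_mat[of _ n n _ n _ n])
  also have "\<dots> = S * ((Q * P) * S)" using sPQ car P Q by (simp add: assoc_mult_mat[of _ n n _ n _ n])
  also have "\<dots> = 1\<^sub>m n" using QP SS car by simp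
  finally have D1D1i: "D1 * D1inv = 1\<^sub>m n" .
  have "D1inv * D1 = sQ * ((P * ((S * S) * Q)) * sP)" unfolding D1eq D1inv_def using car P Q
    by (simp add: assoc_mult_mat[of _ n n _ n _ n])
  also have "\<dots> = sQ * sP" using SS PQ car P Q by simp
  also have "\<dots> = 1\<^sub>m n" by (rule sQP)
  finally have D1iD1: "D1inv * D1 = 1\<^sub>m n" .
  have GLD1: "GL_over n (Kj j) D1"
    unfolding GL_over_def using D1c D1ic D1Kj D1iKj D1D1i D1iD1 unfolding entries_in_def by blast
  have "map_mat (conjKj j) P = P * antidiag n * D1" using conjP final unfolding S_def by simp
  then show ?thesis using GLP GLD diagD MPD GLD1 diagD1 unfolding D_def by blast
qed

end
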